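(* Let $n\ge1$, $1\le k\le n$, $\ell\ge1$, $r:=n(n+1)/2$, $\Sigma\in\mathbb{S}^n$, and let $\tilde\varphi$ be the single-layer objective described in the context. Let $D>0$ and $$\mathcal{D}:=\{(A,b,C,d)\in\mathbb{R}^{\ell\times r}\times\mathbb{R}^\ell\times\mathbb{R}^{nk\times\ell}\times\mathbb{R}^{nk}: \|(A,b,C,d)\|\le D\}.$$ Then the function $\Theta=(A,b,C,d)\mapsto\nabla\tilde\varphi(\Theta)$ is Lipschitz continuous on $\mathcal{D}$ with Lipschitz constant $L_{\tilde\varphi}$ satisfying $$L_{\tilde\varphi}^2=\mathcal{C}_{\tilde\varphi}\,n^2\ell\max\{D^4L_Z^4,\ \ell D^8L_Z^4,\ \ell^2D^6L_Z^2,\ nD^2L_Z^2,\ nk\ell,\ \ell^3D^4\},$$ where $L_Z:=\sqrt{1+\|\Sigma\|_S^2}$ and $\mathcal{C}_{\tilde\varphi}$ is a constant that only depends polynomially on $\sigma'_{\max}$, $\sigma''_{\max}$, and $\mu''_{\max}$.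
   Context: $\mathbb{S}^n$ denotes the real symmetric $n\times n$ matrices. $h:\mathbb{S}^n\to\mathbb{R}^{n(n+1)/2}$, $h(\Sigma)=(\Sigma_{1,1},\dots,\Sigma_{1,n},\Sigma_{2,2},\dots,\Sigma_{2,n},\dots,\Sigma_{n,n})^T$, and $\|\Sigma\|_S:=\|h(\Sigma)\|$ (Euclidean norm). $g:\mathbb{R}^{nk}\to\mathbb{R}^{n\times k}$ maps $v$ to $W$ with $W_{i,j}=v_{(i-1)k+j}$. The activation $\sigma:\mathbb{R}\to[-1,1]$ is twice differentiable with $|\sigma'|\le\sigma'_{\max}$ ($\sigma'_{\max}>0$) and $|\sigma''|\le\sigma''_{\max}$; $\tilde\sigma(u):=(\sigma(u_1),\dots,\sigma(u_\ell))^T$. $\mu:\mathbb{R}\to\mathbb{R}$ is smooth with $|\mu'|\le1$, $|\mu''|\le\mu''_{\max}$. For $\Theta=(A,b,C,d)$ with $A\in\mathbb{R}^{\ell\times r}$, $b\in\mathbb{R}^\ell$, $C\in\mathbb{R}^{nk\times\ell}$, $d\in\mathbb{R}^{nk}$, the single-layer network is $\mathcal{N}^\Theta(x):=C\tilde\sigma(Ax+b)+d$, and with $M_\Theta:=g(\mathcal{N}^\Theta(h(\Sigma)))$, $\tilde\varphi(\Theta):=\sum_{i,j=1}^n\mu\big([M_\Theta M_\Theta^T-\Sigma]_{i,j}\big)$. The norm of a list of matrices is $\|(X^1,\dots,X^\gamma)\|:=(\sum_i\|X^i\|_F^2)^{1/2}$; Lipschitz continuity is with respect to this norm. *)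

theory Defs
  imports "HOL-Analysis.Analysis"
begin

text \<open>Conventions: all indices are 0-based (paper index i corresponds to i-1 here).
  Matrices are functions nat => nat => real, vectors nat => real; only entries with
  indices inside the stated dimensions are ever used.\<close>

type_synonym params =
  "(nat \<Rightarrow> nat \<Rightarrow> real) \<times> (nat \<Rightarrow> real) \<times> (nat \<Rightarrow> nat \<Rightarrow> real) \<times> (nat \<Rightarrow> real)"

definition r_dim :: "nat \<Rightarrow> nat" where
  "r_dim n = n * (n + 1) div 2"

definition hvec :: "nat \<Rightarrow> (nat \<Rightarrow> nat \<Rightarrow> real) \<Rightarrow> real list" where
  "hvec n S = concat (map (\<lambda>i. map (\<lambda>j. S i j) [i..<n]) [0..<n])"

definition norm_S :: "nat \<Rightarrow> (nat \<Rightarrow> nat \<Rightarrow> real) \<Rightarrow> real" where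
  "norm_S n S = sqrt (sum_list (map (\<lambda>x. x\<^sup>2) (hvec n S)))"

definition gmat :: "nat \<Rightarrow> (nat \<Rightarrow> real) \<Rightarrow> nat \<Rightarrow> nat \<Rightarrow> real" where
  "gmat k v i j = v (i * k + j)"

definition net :: "(real \<Rightarrow> real) \<Rightarrow> nat \<Rightarrow> nat \<Rightarrow> (nat \<Rightarrow> nat \<Rightarrow> real) \<Rightarrow> params \<Rightarrow> nat \<Rightarrow> real" where
  "net \<sigma> n l S \<Theta> t = (case \<Theta> of (A, b, C, d) \<Rightarrow>
     (\<Sum>a<l. C t a * \<sigma> ((\<Sum>p<r_dim n. A a p * (hvec n S ! p)) + b a)) + d t)"

definition phi_tilde :: "(real \<Rightarrow> real) \<Rightarrow> (real \<Rightarrow> real) \<Rightarrow> nat \<Rightarrow> nat \<Rightarrow> nat \<Rightarrow>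
    (nat \<Rightarrow> nat \<Rightarrow> real) \<Rightarrow> params \<Rightarrow> real" where
  "phi_tilde \<sigma> \<mu> n k l S \<Theta> =
     (let M = gmat k (net \<sigma> n l S \<Theta>) in
      \<Sum>i<n. \<Sum>j<n. \<mu> ((\<Sum>q<k. M i q * M j q) - S i j))"

definition pnorm :: "nat \<Rightarrow> nat \<Rightarrow> nat \<Rightarrow> params \<Rightarrow> real" where
  "pnorm n k l \<Theta> = (case \<Theta> of (A, b, C, d) \<Rightarrow>
     sqrt ((\<Sum>a<l. \<Sum>p<r_dim n. (A a p)\<^sup>2) + (\<Sum>a<l. (b a)\<^sup>2)
         + (\<Sum>t<n*k. \<Sum>a<l. (C t a)\<^sup>2) + (\<Sum>t<n*k. (d t)\<^sup>2)))"

definition pinner :: "nat \<Rightarrow> nat \<Rightarrow> nat \<Rightarrow> params \<Rightarrow> params \<Rightarrow> real" where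
  "pinner n k l \<Theta> \<Theta>' = (case \<Theta> of (A, b, C, d) \<Rightarrow> case \<Theta>' of (A', b', C', d') \<Rightarrow>
     (\<Sum>a<l. \<Sum>p<r_dim n. A a p * A' a p) + (\<Sum>a<l. b a * b' a)
   + (\<Sum>t<n*k. \<Sum>a<l. C t a * C' t a) + (\<Sum>t<n*k. d t * d' t))"

definition padd :: "params \<Rightarrow> params \<Rightarrow> params" where
  "padd \<Theta> \<Theta>' = (case \<Theta> of (A, b, C, d) \<Rightarrow> case \<Theta>' of (A', b', C', d') \<Rightarrow>
     (\<lambda>i j. A i j + A' i j, \<lambda>i. b i + b' i, \<lambda>i j. C i j + C' i j, \<lambda>i. d i + d' i))"

definition psub :: "params \<Rightarrow> params \<Rightarrow> params" where
  "psub \<Theta> \<Theta>' = (case \<Theta> of (A, b, C, d) \<Rightarrow> case \<Theta>' of (A', b', C', d') \<Rightarrow>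
     (\<lambda>i j. A i j - A' i j, \<lambda>i. b i - b' i, \<lambda>i j. C i j - C' i j, \<lambda>i. d i - d' i))"

definition has_pgrad :: "nat \<Rightarrow> nat \<Rightarrow> nat \<Rightarrow> (params \<Rightarrow> real) \<Rightarrow> params \<Rightarrow> params \<Rightarrow> bool" where
  "has_pgrad n k l f \<Theta> G \<longleftrightarrow>
     (\<forall>\<epsilon>>0. \<exists>\<delta>>0. \<forall>\<Delta>. pnorm n k l \<Delta> < \<delta> \<longrightarrow>
        \<bar>f (padd \<Theta> \<Delta>) - f \<Theta> - pinner n k l G \<Delta>\<bar> \<le> \<epsilon> * pnorm n k l \<Delta>)"

definition poly3 :: "(nat \<Rightarrow> nat \<Rightarrow> nat \<Rightarrow> real) \<Rightarrow> nat \<Rightarrow> real \<Rightarrow> real \<Rightarrow> real \<Rightarrow> real" where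
  "poly3 c N x y z = (\<Sum>i\<le>N. \<Sum>j\<le>N. \<Sum>m\<le>N. c i j m * x ^ i * y ^ j * z ^ m)"

end

theory Submission
  imports Defs
begin

lemma cs_sqrt:
  fixes f g :: "'a \<Rightarrow> real"
  shows "\<bar>\<Sum>i\<in>I. f i * g i\<bar> \<le> sqrt (\<Sum>i\<in>I. (f i)\<^sup>2) * sqrt (\<Sum>i\<in>I. (g i)\<^sup>2)"
proof -
  have "\<bar>\<Sum>i\<in>I. f i * g i\<bar> = sqrt ((\<Sum>i\<in>I. f i * g i)\<^sup>2)" by simp
  also have "\<dots> \<le> sqrt ((\<Sum>i\<in>I. (f i)\<^sup>2) * (\<Sum>i\<in>I. (g i)\<^sup>2))"
    using Cauchy_Schwarz_ineq_sum real_sqrt_le_mono by blast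
  finally show ?thesis by (simp add: real_sqrt_mult)
qed

lemma cs2_sqrt:
  fixes f g :: "'a \<Rightarrow> 'b \<Rightarrow> real"
  assumes "finite I" "finite J"
  shows "\<bar>\<Sum>i\<in>I. \<Sum>j\<in>J. f i j * g i j\<bar> \<le> sqrt (\<Sum>i\<in>I. \<Sum>j\<in>J. (f i j)\<^sup>2) * sqrt (\<Sum>i\<in>I. \<Sum>j\<in>J. (g i j)\<^sup>2)"
proof -
  have e: "\<And>h. (\<Sum>i\<in>I. \<Sum>j\<in>J. h i j) = (\<Sum>x\<in>I \<times> J. h (fst x) (snd x))"
    by (simp add: sum.cartesian_product case_prod_beta)
  show ?thesis unfolding e by (rule cs_sqrt)
qed

lemma sqrt2_le:
  fixes a1 a2 b1 b2 :: real
  assumes "0 \<le> a1" "0 \<le> a2" "0 \<le> b1" "0 \<le> b2"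
  shows "sqrt a1 * sqrt b1 + sqrt a2 * sqrt b2 \<le> sqrt (a1 + a2) * sqrt (b1 + b2)"
proof -
  have "(\<Sum>i\<in>{0::nat,1}. ([sqrt a1, sqrt a2] ! i) * ([sqrt b1, sqrt b2] ! i))
     \<le> sqrt (\<Sum>i\<in>{0::nat,1}. ([sqrt a1, sqrt a2] ! i)\<^sup>2) * sqrt (\<Sum>i\<in>{0::nat,1}. ([sqrt b1, sqrt b2] ! i)\<^sup>2)"
    using cs_sqrt[of "\<lambda>i. [sqrt a1, sqrt a2] ! i" "\<lambda>i. [sqrt b1, sqrt b2] ! i" "{0::nat,1}"] by linarith
  then show ?thesis using assms by simp
qed

lemma sq_sum2: "((a::real) + b)\<^sup>2 \<le> 2 * a\<^sup>2 + 2 * b\<^sup>2"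
proof -
  have "0 \<le> (a-b)\<^sup>2" by simp
  then show ?thesis by (simp add: power2_eq_square algebra_simps)
qed

lemma sq_sum3: "((a::real) + b + c)\<^sup>2 \<le> 3 * a\<^sup>2 + 3 * b\<^sup>2 + 3 * c\<^sup>2"
proof -
  have "0 \<le> (a-b)\<^sup>2 + (b-c)\<^sup>2 + (a-c)\<^sup>2" by simp
  then show ?thesis by (simp add: power2_eq_square algebra_simps)
qed

lemma vec_mat_cs:
  fixes v :: "'a \<Rightarrow> real" and Q :: "'a \<Rightarrow> 'b \<Rightarrow> real"
  assumes "finite J" "finite K"
  shows "(\<Sum>q\<in>K. (\<Sum>j\<in>J. v j * Q j q)\<^sup>2) \<le> (\<Sum>j\<in>J. (v j)\<^sup>2) * (\<Sum>j\<in>J. \<Sum>q\<in>K. (Q j q)\<^sup>2)"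
proof -
  have "(\<Sum>q\<in>K. (\<Sum>j\<in>J. v j * Q j q)\<^sup>2) \<le> (\<Sum>q\<in>K. (\<Sum>j\<in>J. (v j)\<^sup>2) * (\<Sum>j\<in>J. (Q j q)\<^sup>2))"
    by (rule sum_mono) (rule Cauchy_Schwarz_ineq_sum)
  also have "\<dots> = (\<Sum>j\<in>J. (v j)\<^sup>2) * (\<Sum>j\<in>J. \<Sum>q\<in>K. (Q j q)\<^sup>2)"
    by (simp add: sum_distrib_left sum.swap[of _ K J])
  finally show ?thesis .
qed

lemma mat_mat_cs:
  fixes P :: "'c \<Rightarrow> 'a \<Rightarrow> real" and Q :: "'a \<Rightarrow> 'b \<Rightarrow> real"
  assumes "finite J" "finite K"
  shows "(\<Sum>i\<in>I. \<Sum>q\<in>K. (\<Sum>j\<in>J. P i j * Q j q)\<^sup>2) \<le> (\<Sum>i\<in>I. \<Sum>j\<in>J. (P i j)\<^sup>2) * (\<Sum>j\<in>J. \<Sum>q\<in>K. (Q j q)\<^sup>2)"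
proof -
  have "(\<Sum>i\<in>I. \<Sum>q\<in>K. (\<Sum>j\<in>J. P i j * Q j q)\<^sup>2) \<le> (\<Sum>i\<in>I. (\<Sum>j\<in>J. (P i j)\<^sup>2) * (\<Sum>j\<in>J. \<Sum>q\<in>K. (Q j q)\<^sup>2))"
    by (rule sum_mono) (rule vec_mat_cs[OF assms])
  also have "\<dots> = (\<Sum>i\<in>I. \<Sum>j\<in>J. (P i j)\<^sup>2) * (\<Sum>j\<in>J. \<Sum>q\<in>K. (Q j q)\<^sup>2)"
    by (simp add: sum_distrib_right)
  finally show ?thesis .
qed

lemma sum_mult_reindex:
  fixes f :: "nat \<Rightarrow> 'a::comm_monoid_add"
  shows "(\<Sum>t<n*k. f t) = (\<Sum>i<n. \<Sum>q<k. f (i*k+q))"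
proof (induction n)
  case 0 then show ?case by simp
next
  case (Suc n)
  have e: "{..<Suc n * k} = {..<n*k} \<union> {n*k..<n*k+k}" by auto
  have "(\<Sum>t<Suc n*k. f t) = (\<Sum>t<n*k. f t) + (\<Sum>t\<in>{n*k..<n*k+k}. f t)"
    unfolding e by (rule sum.union_disjoint) auto
  also have "(\<Sum>t\<in>{n*k..<n*k+k}. f t) = (\<Sum>q<k. f (n*k+q))"
  proof -
    have "(\<Sum>t\<in>{0+n*k..<k+n*k}. f t) = (\<Sum>q\<in>{0..<k}. f (q + n*k))"
      by (rule sum.shift_bounds_nat_ivl)
    then show ?thesis by (simp add: lessThan_atLeast0 add.commute)
  qed
  finally show ?case using Suc by simp
qed

lemma lip_deriv:
  fixes f f' :: "real \<Rightarrow> real"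
  assumes "\<And>x. (f has_real_derivative f' x) (at x)" "\<And>x. \<bar>f' x\<bar> \<le> B"
  shows "\<bar>f x - f y\<bar> \<le> B * \<bar>x - y\<bar>"
proof -
  have *: "\<bar>f b - f a\<bar> \<le> B * \<bar>b - a\<bar>" if ab: "a < b" for a b
  proof -
    obtain z where "f b - f a = (b - a) * f' z" using MVT2[OF ab, of f f'] assms(1) by blast
    then have "\<bar>f b - f a\<bar> = \<bar>b - a\<bar> * \<bar>f' z\<bar>" by (simp add: abs_mult)
    also have "\<dots> \<le> \<bar>b - a\<bar> * B" by (rule mult_left_mono) (use assms(2) in auto)
    finally show ?thesis by (simp add: mult.commute)
  qed
  show ?thesis
    by (cases x y rule: linorder_cases) (use *[of x y] *[of y x] in \<open>auto simp: abs_minus_commute\<close>)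
qed

lemma len_hvec: "length (hvec n S) = r_dim n"
proof -
  have "length (hvec n S) = (\<Sum>i<n. n - i)"
    by (simp add: hvec_def length_concat sum_list_sum_nth lessThan_atLeast0 comp_def)
  moreover have h2: "2 * (\<Sum>i<n. n - i) = n * (n + 1)" for n :: nat
  proof (induction n)
    case (Suc n)
    have "(\<Sum>i<Suc n. Suc n - i) = (\<Sum>i<n. Suc n - i) + 1" by simp
    also have "(\<Sum>i<n. Suc n - i) = (\<Sum>i<n. (n - i) + 1)" by (rule sum.cong) auto
    also have "\<dots> = (\<Sum>i<n. n - i) + n" by (subst sum.distrib) simp
    finally have "(\<Sum>i<Suc n. Suc n - i) = (\<Sum>i<n. n - i) + Suc n" by simp
    then show ?case using Suc by simp
  qed simp
  moreover have "(\<Sum>i<n. n - i) = n*(n+1) div 2"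
    using nonzero_mult_div_cancel_left[of "2::nat" "\<Sum>i<n. n - i"] unfolding h2 by simp
  ultimately show ?thesis unfolding r_dim_def by simp
qed

definition pA :: "params \<Rightarrow> nat \<Rightarrow> nat \<Rightarrow> real" where "pA X = fst X"
definition pb :: "params \<Rightarrow> nat \<Rightarrow> real" where "pb X = fst (snd X)"
definition pC :: "params \<Rightarrow> nat \<Rightarrow> nat \<Rightarrow> real" where "pC X = fst (snd (snd X))"
definition pd :: "params \<Rightarrow> nat \<Rightarrow> real" where "pd X = snd (snd (snd X))"

lemma acc_tuple[simp]: "pA (A, b, C, d) = A" "pb (A, b, C, d) = b" "pC (A, b, C, d) = C" "pd (A, b, C, d) = d"
  by (simp_all add: pA_def pb_def pC_def pd_def)

lemma padd_acc[simp]: "pA (padd X Y) i j = pA X i j + pA Y i j" "pb (padd X Y) i = pb X i + pb Y i"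
  "pC (padd X Y) i j = pC X i j + pC Y i j" "pd (padd X Y) i = pd X i + pd Y i"
  by (simp_all add: padd_def pA_def pb_def pC_def pd_def split: prod.splits)

lemma psub_acc[simp]: "pA (psub X Y) i j = pA X i j - pA Y i j" "pb (psub X Y) i = pb X i - pb Y i"
  "pC (psub X Y) i j = pC X i j - pC Y i j" "pd (psub X Y) i = pd X i - pd Y i"
  by (simp_all add: psub_def pA_def pb_def pC_def pd_def split: prod.splits)

definition pscale :: "real \<Rightarrow> params \<Rightarrow> params" where
  "pscale c X = (\<lambda>i j. c * pA X i j, \<lambda>i. c * pb X i, \<lambda>i j. c * pC X i j, \<lambda>i. c * pd X i)"

lemma pscale_acc[simp]: "pA (pscale c X) i j = c * pA X i j" "pb (pscale c X) i = c * pb X i"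
  "pC (pscale c X) i j = c * pC X i j" "pd (pscale c X) i = c * pd X i"
  by (simp_all add: pscale_def)

lemma params_eqI: "pA X = pA Y \<Longrightarrow> pb X = pb Y \<Longrightarrow> pC X = pC Y \<Longrightarrow> pd X = pd Y \<Longrightarrow> X = Y"
  by (simp add: pA_def pb_def pC_def pd_def prod_eq_iff)

definition psq :: "nat \<Rightarrow> nat \<Rightarrow> nat \<Rightarrow> params \<Rightarrow> real" where
  "psq n k l X = (\<Sum>a<l. \<Sum>p<r_dim n. (pA X a p)\<^sup>2) + (\<Sum>a<l. (pb X a)\<^sup>2)
         + (\<Sum>t<n*k. \<Sum>a<l. (pC X t a)\<^sup>2) + (\<Sum>t<n*k. (pd X t)\<^sup>2)"

lemma pnorm_psq: "pnorm n k l X = sqrt (psq n k l X)"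
  by (simp add: pnorm_def psq_def pA_def pb_def pC_def pd_def split: prod.splits)

lemma psq_nonneg: "0 \<le> psq n k l X"
  by (simp add: psq_def sum_nonneg)

lemma pnorm_nonneg: "0 \<le> pnorm n k l X"
  by (simp add: pnorm_psq psq_nonneg)

lemma pnorm_sq: "(pnorm n k l X)\<^sup>2 = psq n k l X"
  by (simp add: pnorm_psq psq_nonneg)

lemma pinner_acc: "pinner n k l X Y = (\<Sum>a<l. \<Sum>p<r_dim n. pA X a p * pA Y a p) + (\<Sum>a<l. pb X a * pb Y a)
   + (\<Sum>t<n*k. \<Sum>a<l. pC X t a * pC Y t a) + (\<Sum>t<n*k. pd X t * pd Y t)"
  by (simp add: pinner_def pA_def pb_def pC_def pd_def split: prod.splits)

lemma pinner_cs: "\<bar>pinner n k l X Y\<bar> \<le> pnorm n k l X * pnorm n k l Y"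
proof -
  define a1 where "a1 = (\<Sum>a<l. \<Sum>p<r_dim n. pA X a p * pA Y a p)"
  define a2 where "a2 = (\<Sum>a<l. pb X a * pb Y a)"
  define a3 where "a3 = (\<Sum>t<n*k. \<Sum>a<l. pC X t a * pC Y t a)"
  define a4 where "a4 = (\<Sum>t<n*k. pd X t * pd Y t)"
  define P1 where "P1 = (\<Sum>a<l. \<Sum>p<r_dim n. (pA X a p)\<^sup>2)"
  define P2 where "P2 = (\<Sum>a<l. (pb X a)\<^sup>2)"
  define P3 where "P3 = (\<Sum>t<n*k. \<Sum>a<l. (pC X t a)\<^sup>2)"
  define P4 where "P4 = (\<Sum>t<n*k. (pd X t)\<^sup>2)"
  define Q1 where "Q1 = (\<Sum>a<l. \<Sum>p<r_dim n. (pA Y a p)\<^sup>2)"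
  define Q2 where "Q2 = (\<Sum>a<l. (pb Y a)\<^sup>2)"
  define Q3 where "Q3 = (\<Sum>t<n*k. \<Sum>a<l. (pC Y t a)\<^sup>2)"
  define Q4 where "Q4 = (\<Sum>t<n*k. (pd Y t)\<^sup>2)"
  have h1: "\<bar>a1\<bar> \<le> sqrt P1 * sqrt Q1" unfolding a1_def P1_def Q1_def by (rule cs2_sqrt) auto
  have h2: "\<bar>a2\<bar> \<le> sqrt P2 * sqrt Q2" unfolding a2_def P2_def Q2_def by (rule cs_sqrt)
  have h3: "\<bar>a3\<bar> \<le> sqrt P3 * sqrt Q3" unfolding a3_def P3_def Q3_def by (rule cs2_sqrt) auto
  have h4: "\<bar>a4\<bar> \<le> sqrt P4 * sqrt Q4" unfolding a4_def P4_def Q4_def by (rule cs_sqrt)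
  have nn: "0 \<le> P1" "0 \<le> P2" "0 \<le> P3" "0 \<le> P4" "0 \<le> Q1" "0 \<le> Q2" "0 \<le> Q3" "0 \<le> Q4"
    unfolding P1_def P2_def P3_def P4_def Q1_def Q2_def Q3_def Q4_def by (simp_all add: sum_nonneg)
  have "\<bar>a1 + a2 + a3 + a4\<bar> \<le> sqrt P1 * sqrt Q1 + sqrt P2 * sqrt Q2 + sqrt P3 * sqrt Q3 + sqrt P4 * sqrt Q4"
    using h1 h2 h3 h4 by linarith
  also have "\<dots> \<le> sqrt (P1 + P2) * sqrt (Q1 + Q2) + sqrt P3 * sqrt Q3 + sqrt P4 * sqrt Q4"
    using sqrt2_le[of P1 P2 Q1 Q2] nn by linarith
  also have "\<dots> \<le> sqrt (P1 + P2 + P3) * sqrt (Q1 + Q2 + Q3) + sqrt P4 * sqrt Q4"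
    using sqrt2_le[of "P1 + P2" P3 "Q1 + Q2" Q3] nn by linarith
  also have "\<dots> \<le> sqrt (P1 + P2 + P3 + P4) * sqrt (Q1 + Q2 + Q3 + Q4)"
    using sqrt2_le[of "P1 + P2 + P3" P4 "Q1 + Q2 + Q3" Q4] nn by linarith
  finally show ?thesis
    unfolding pinner_acc pnorm_psq psq_def a1_def a2_def a3_def a4_def P1_def P2_def P3_def P4_def
      Q1_def Q2_def Q3_def Q4_def .
qed

lemma psq_padd: "psq n k l (padd X Y) = psq n k l X + 2 * pinner n k l X Y + psq n k l Y"
  by (simp add: psq_def pinner_acc power2_sum sum.distrib sum_distrib_left algebra_simps)

lemma pnorm_triangle: "pnorm n k l (padd X Y) \<le> pnorm n k l X + pnorm n k l Y"
proof -
  have "psq n k l (padd X Y) \<le> (pnorm n k l X + pnorm n k l Y)\<^sup>2"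
    using pinner_cs[of n k l X Y] unfolding psq_padd power2_sum pnorm_sq by linarith
  then have "sqrt (psq n k l (padd X Y)) \<le> sqrt ((pnorm n k l X + pnorm n k l Y)\<^sup>2)"
    by (rule real_sqrt_le_mono)
  then show ?thesis using pnorm_nonneg[of n k l X] pnorm_nonneg[of n k l Y] by (simp add: pnorm_psq)
qed

lemma pinner_psub: "pinner n k l (psub X Y) Z = pinner n k l X Z - pinner n k l Y Z"
  by (simp add: pinner_acc sum_subtractf left_diff_distrib)

lemma psq_pscale: "psq n k l (pscale c X) = c\<^sup>2 * psq n k l X"
  by (simp add: psq_def power_mult_distrib sum_distrib_left algebra_simps)

lemma pnorm_pscale: "pnorm n k l (pscale c X) = \<bar>c\<bar> * pnorm n k l X"
  by (simp add: pnorm_psq psq_pscale real_sqrt_mult)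

lemma psub_padd_scale: "psub (padd X (pscale c Y)) X = pscale c Y"
  by (rule params_eqI) (simp_all add: fun_eq_iff)

definition xv :: "nat \<Rightarrow> (nat \<Rightarrow> nat \<Rightarrow> real) \<Rightarrow> nat \<Rightarrow> real" where
  "xv n S p = hvec n S ! p"

definition zf :: "nat \<Rightarrow> (nat \<Rightarrow> nat \<Rightarrow> real) \<Rightarrow> params \<Rightarrow> nat \<Rightarrow> real" where
  "zf n S X a = (\<Sum>p<r_dim n. pA X a p * xv n S p) + pb X a"

lemma net_acc: "net \<sigma> n l S X t = (\<Sum>a<l. pC X t a * \<sigma> (zf n S X a)) + pd X t"
  by (simp add: net_def zf_def xv_def pA_def pb_def pC_def pd_def split: prod.splits)

definition Mf :: "(real \<Rightarrow> real) \<Rightarrow> nat \<Rightarrow> nat \<Rightarrow> nat \<Rightarrow> (nat \<Rightarrow> nat \<Rightarrow> real) \<Rightarrow> params \<Rightarrow> nat \<Rightarrow> nat \<Rightarrow> real" where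
  "Mf \<sigma> n k l S X i q = net \<sigma> n l S X (i*k+q)"

definition Zf :: "(real \<Rightarrow> real) \<Rightarrow> nat \<Rightarrow> nat \<Rightarrow> nat \<Rightarrow> (nat \<Rightarrow> nat \<Rightarrow> real) \<Rightarrow> params \<Rightarrow> nat \<Rightarrow> nat \<Rightarrow> real" where
  "Zf \<sigma> n k l S X i j = (\<Sum>q<k. Mf \<sigma> n k l S X i q * Mf \<sigma> n k l S X j q) - S i j"

definition Ef :: "(real \<Rightarrow> real) \<Rightarrow> (real \<Rightarrow> real) \<Rightarrow> nat \<Rightarrow> nat \<Rightarrow> nat \<Rightarrow> (nat \<Rightarrow> nat \<Rightarrow> real) \<Rightarrow> params \<Rightarrow> nat \<Rightarrow> nat \<Rightarrow> real" where
  "Ef \<sigma> \<mu>1 n k l S X i q = (\<Sum>j<n. (\<mu>1 (Zf \<sigma> n k l S X i j) + \<mu>1 (Zf \<sigma> n k l S X j i)) * Mf \<sigma> n k l S X j q)"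

definition Et :: "(real \<Rightarrow> real) \<Rightarrow> (real \<Rightarrow> real) \<Rightarrow> nat \<Rightarrow> nat \<Rightarrow> nat \<Rightarrow> (nat \<Rightarrow> nat \<Rightarrow> real) \<Rightarrow> params \<Rightarrow> nat \<Rightarrow> real" where
  "Et \<sigma> \<mu>1 n k l S X t = Ef \<sigma> \<mu>1 n k l S X (t div k) (t mod k)"

definition uf :: "(real \<Rightarrow> real) \<Rightarrow> (real \<Rightarrow> real) \<Rightarrow> nat \<Rightarrow> nat \<Rightarrow> nat \<Rightarrow> (nat \<Rightarrow> nat \<Rightarrow> real) \<Rightarrow> params \<Rightarrow> nat \<Rightarrow> real" where
  "uf \<sigma> \<mu>1 n k l S X a = (\<Sum>t<n*k. Et \<sigma> \<mu>1 n k l S X t * pC X t a)"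

definition grad :: "(real \<Rightarrow> real) \<Rightarrow> (real \<Rightarrow> real) \<Rightarrow> (real \<Rightarrow> real) \<Rightarrow> nat \<Rightarrow> nat \<Rightarrow> nat \<Rightarrow> (nat \<Rightarrow> nat \<Rightarrow> real) \<Rightarrow> params \<Rightarrow> params" where
  "grad \<sigma> \<sigma>1 \<mu>1 n k l S X =
    (\<lambda>a p. \<sigma>1 (zf n S X a) * uf \<sigma> \<mu>1 n k l S X a * xv n S p,
     \<lambda>a. \<sigma>1 (zf n S X a) * uf \<sigma> \<mu>1 n k l S X a,
     \<lambda>t a. Et \<sigma> \<mu>1 n k l S X t * \<sigma> (zf n S X a),
     \<lambda>t. Et \<sigma> \<mu>1 n k l S X t)"

lemma phi_eq: "phi_tilde \<sigma> \<mu> n k l S X = (\<Sum>i<n. \<Sum>j<n. \<mu> (Zf \<sigma> n k l S X i j))"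
  by (simp add: phi_tilde_def Zf_def Mf_def gmat_def Let_def)

lemma zf_lin: "zf n S (padd X (pscale c Y)) a = zf n S X a + c * zf n S Y a"
  by (simp add: zf_def sum.distrib sum_distrib_left algebra_simps)

lemma reindex_divmod:
  fixes g :: "nat \<Rightarrow> nat \<Rightarrow> 'a::comm_monoid_add"
  shows "(\<Sum>t<n*k. g (t div k) (t mod k)) = (\<Sum>i<n. \<Sum>q<k. g i q)"
proof -
  have "(\<Sum>t<n*k. g (t div k) (t mod k)) = (\<Sum>i<n. \<Sum>q<k. g ((i*k+q) div k) ((i*k+q) mod k))"
    by (rule sum_mult_reindex)
  also have "\<dots> = (\<Sum>i<n. \<Sum>q<k. g i q)"
    by (intro sum.cong refl) auto
  finally show ?thesis .
qed

definition Nd :: "(real \<Rightarrow> real) \<Rightarrow> (real \<Rightarrow> real) \<Rightarrow> nat \<Rightarrow> nat \<Rightarrow> (nat \<Rightarrow> nat \<Rightarrow> real) \<Rightarrow> params \<Rightarrow> params \<Rightarrow> nat \<Rightarrow> real" where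
  "Nd \<sigma> \<sigma>1 n l S X Y t = (\<Sum>a<l. pC Y t a * \<sigma> (zf n S X a) + pC X t a * (\<sigma>1 (zf n S X a) * zf n S Y a)) + pd Y t"

context
  fixes \<sigma> \<sigma>1 \<mu> \<mu>1 :: "real \<Rightarrow> real"
  assumes d\<sigma>: "\<And>x. (\<sigma> has_real_derivative \<sigma>1 x) (at x)"
    and d\<mu>: "\<And>x. (\<mu> has_real_derivative \<mu>1 x) (at x)"
begin

lemma deriv_zf: "((\<lambda>\<tau>. zf n S (padd X (pscale \<tau> Y)) a) has_real_derivative zf n S Y a) (at \<tau>)"
  unfolding zf_lin by (auto intro!: derivative_eq_intros)

lemma deriv_net: "((\<lambda>\<tau>. net \<sigma> n l S (padd X (pscale \<tau> Y)) t) has_real_derivative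
     Nd \<sigma> \<sigma>1 n l S (padd X (pscale \<tau> Y)) Y t) (at \<tau>)"
proof -
  have "((\<lambda>\<tau>. (\<Sum>a<l. (pC X t a + \<tau> * pC Y t a) * \<sigma> (zf n S (padd X (pscale \<tau> Y)) a)) + (pd X t + \<tau> * pd Y t))
     has_real_derivative
     (\<Sum>a<l. pC Y t a * \<sigma> (zf n S (padd X (pscale \<tau> Y)) a) + (\<sigma>1 (zf n S (padd X (pscale \<tau> Y)) a) * zf n S Y a) * (pC X t a + \<tau> * pC Y t a)) + pd Y t) (at \<tau>)"
    apply (intro DERIV_add DERIV_sum DERIV_mult DERIV_chain2[OF d\<sigma>] deriv_zf)
       apply (auto intro!: derivative_eq_intros)
    done
  then show ?thesis
    by (simp add: net_acc Nd_def algebra_simps)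
qed

lemma deriv_Zf: "((\<lambda>\<tau>. Zf \<sigma> n k l S (padd X (pscale \<tau> Y)) i j) has_real_derivative
     (\<Sum>q<k. Nd \<sigma> \<sigma>1 n l S (padd X (pscale \<tau> Y)) Y (i*k+q) * Mf \<sigma> n k l S (padd X (pscale \<tau> Y)) j q
        + Mf \<sigma> n k l S (padd X (pscale \<tau> Y)) i q * Nd \<sigma> \<sigma>1 n l S (padd X (pscale \<tau> Y)) Y (j*k+q))) (at \<tau>)"
proof -
  have "((\<lambda>\<tau>. (\<Sum>q<k. net \<sigma> n l S (padd X (pscale \<tau> Y)) (i*k+q) * net \<sigma> n l S (padd X (pscale \<tau> Y)) (j*k+q)) - S i j)
     has_real_derivative
     (\<Sum>q<k. Nd \<sigma> \<sigma>1 n l S (padd X (pscale \<tau> Y)) Y (i*k+q) * net \<sigma> n l S (padd X (pscale \<tau> Y)) (j*k+q)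
        + Nd \<sigma> \<sigma>1 n l S (padd X (pscale \<tau> Y)) Y (j*k+q) * net \<sigma> n l S (padd X (pscale \<tau> Y)) (i*k+q)) - 0) (at \<tau>)"
    by (intro DERIV_diff DERIV_sum DERIV_mult deriv_net DERIV_const)
  then show ?thesis by (simp add: Zf_def Mf_def algebra_simps)
qed

lemma deriv_phi_raw: "((\<lambda>\<tau>. phi_tilde \<sigma> \<mu> n k l S (padd X (pscale \<tau> Y))) has_real_derivative
    (\<Sum>i<n. \<Sum>j<n. \<mu>1 (Zf \<sigma> n k l S (padd X (pscale \<tau> Y)) i j) *
      (\<Sum>q<k. Nd \<sigma> \<sigma>1 n l S (padd X (pscale \<tau> Y)) Y (i*k+q) * Mf \<sigma> n k l S (padd X (pscale \<tau> Y)) j q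
        + Mf \<sigma> n k l S (padd X (pscale \<tau> Y)) i q * Nd \<sigma> \<sigma>1 n l S (padd X (pscale \<tau> Y)) Y (j*k+q)))) (at \<tau>)"
  unfolding phi_eq
  by (intro DERIV_sum DERIV_chain2[OF d\<mu>] deriv_Zf)

end

lemma comb1:
  fixes w M :: "nat \<Rightarrow> nat \<Rightarrow> real" and N :: "nat \<Rightarrow> real"
  shows "(\<Sum>i<n. \<Sum>j<n. w i j * (\<Sum>q<k. N (i*k+q) * M j q + M i q * N (j*k+q)))
       = (\<Sum>t<n*k. (\<Sum>j<n. (w (t div k) j + w j (t div k)) * M j (t mod k)) * N t)"
proof -
  have s1: "(\<Sum>i<n. \<Sum>j<n. w i j * (\<Sum>q<k. N (i*k+q) * M j q + M i q * N (j*k+q)))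
     = (\<Sum>i<n. \<Sum>j<n. \<Sum>q<k. w i j * M j q * N (i*k+q)) + (\<Sum>i<n. \<Sum>j<n. \<Sum>q<k. w i j * M i q * N (j*k+q))"
    by (simp add: sum_distrib_left distrib_left sum.distrib mult.commute mult.left_commute)
  have s2: "(\<Sum>i<n. \<Sum>j<n. \<Sum>q<k. w i j * M i q * N (j*k+q)) = (\<Sum>i<n. \<Sum>j<n. \<Sum>q<k. w j i * M j q * N (i*k+q))"
    by (rule sum.swap)
  have s3: "(\<Sum>i<n. \<Sum>j<n. \<Sum>q<k. w i j * M j q * N (i*k+q)) + (\<Sum>i<n. \<Sum>j<n. \<Sum>q<k. w j i * M j q * N (i*k+q))
     = (\<Sum>i<n. \<Sum>j<n. \<Sum>q<k. (w i j + w j i) * M j q * N (i*k+q))"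
    by (simp add: sum.distrib[symmetric] algebra_simps)
  have s4: "(\<Sum>i<n. \<Sum>j<n. \<Sum>q<k. (w i j + w j i) * M j q * N (i*k+q))
      = (\<Sum>i<n. \<Sum>q<k. (\<Sum>j<n. (w i j + w j i) * M j q) * N (i*k+q))"
    by (simp add: sum_distrib_right sum.swap[of _ "{..<n}" "{..<k}"])
  have s5: "(\<Sum>i<n. \<Sum>q<k. (\<Sum>j<n. (w i j + w j i) * M j q) * N (i*k+q))
      = (\<Sum>t<n*k. (\<lambda>i q. (\<Sum>j<n. (w i j + w j i) * M j q) * N (i*k+q)) (t div k) (t mod k))"
    by (rule reindex_divmod[symmetric])
  have s6: "\<dots> = (\<Sum>t<n*k. (\<Sum>j<n. (w (t div k) j + w j (t div k)) * M j (t mod k)) * N t)"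
    by (simp add: div_mult_mod_eq)
  show ?thesis using s1 s2 s3 s4 s5 s6 by simp
qed

lemma deriv_alg:
  "(\<Sum>i<n. \<Sum>j<n. \<mu>1 (Zf \<sigma> n k l S Z i j) *
      (\<Sum>q<k. Nd \<sigma> \<sigma>1 n l S Z Y (i*k+q) * Mf \<sigma> n k l S Z j q
        + Mf \<sigma> n k l S Z i q * Nd \<sigma> \<sigma>1 n l S Z Y (j*k+q)))
   = pinner n k l (grad \<sigma> \<sigma>1 \<mu>1 n k l S Z) Y"
proof -
  let ?E = "Et \<sigma> \<mu>1 n k l S Z"
  let ?N = "Nd \<sigma> \<sigma>1 n l S Z Y"
  let ?z = "zf n S Z"
  have "(\<Sum>i<n. \<Sum>j<n. \<mu>1 (Zf \<sigma> n k l S Z i j) *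
      (\<Sum>q<k. ?N (i*k+q) * Mf \<sigma> n k l S Z j q + Mf \<sigma> n k l S Z i q * ?N (j*k+q)))
     = (\<Sum>t<n*k. ?E t * ?N t)"
    using comb1[where w="\<lambda>i j. \<mu>1 (Zf \<sigma> n k l S Z i j)" and M="Mf \<sigma> n k l S Z" and N="?N" and n=n and k=k]
    by (simp add: Et_def Ef_def)
  also have "\<dots> = (\<Sum>t<n*k. \<Sum>a<l. ?E t * \<sigma> (?z a) * pC Y t a)
      + (\<Sum>a<l. \<sigma>1 (?z a) * zf n S Y a * (\<Sum>t<n*k. ?E t * pC Z t a)) + (\<Sum>t<n*k. ?E t * pd Y t)"
  proof -
    have "(\<Sum>t<n*k. ?E t * ?N t) = (\<Sum>t<n*k. \<Sum>a<l. ?E t * \<sigma> (?z a) * pC Y t a)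
      + (\<Sum>t<n*k. \<Sum>a<l. \<sigma>1 (?z a) * zf n S Y a * (?E t * pC Z t a)) + (\<Sum>t<n*k. ?E t * pd Y t)"
      unfolding Nd_def by (simp add: distrib_left sum.distrib sum_distrib_left mult.commute mult.left_commute)
    also have "(\<Sum>t<n*k. \<Sum>a<l. \<sigma>1 (?z a) * zf n S Y a * (?E t * pC Z t a))
       = (\<Sum>a<l. \<sigma>1 (?z a) * zf n S Y a * (\<Sum>t<n*k. ?E t * pC Z t a))"
      by (simp add: sum_distrib_left sum.swap[of _ "{..<n*k}" "{..<l}"])
    finally show ?thesis .
  qed
  also have "(\<Sum>a<l. \<sigma>1 (?z a) * zf n S Y a * (\<Sum>t<n*k. ?E t * pC Z t a))
     = (\<Sum>a<l. \<Sum>p<r_dim n. \<sigma>1 (?z a) * uf \<sigma> \<mu>1 n k l S Z a * xv n S p * pA Y a p)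
       + (\<Sum>a<l. \<sigma>1 (?z a) * uf \<sigma> \<mu>1 n k l S Z a * pb Y a)"
  proof -
    have "\<sigma>1 (?z a) * zf n S Y a * (\<Sum>t<n*k. ?E t * pC Z t a)
      = (\<Sum>p<r_dim n. \<sigma>1 (?z a) * uf \<sigma> \<mu>1 n k l S Z a * xv n S p * pA Y a p)
       + \<sigma>1 (?z a) * uf \<sigma> \<mu>1 n k l S Z a * pb Y a" for a
      unfolding uf_def[symmetric] zf_def[of n S Y a]
      by (simp add: distrib_left sum_distrib_left mult.commute mult.left_commute)
    then show ?thesis by (simp add: sum.distrib)
  qed
  finally show ?thesis
    by (simp add: pinner_acc grad_def)
qed

lemma prod_diff:
  fixes P P' :: "'i \<Rightarrow> 'j \<Rightarrow> real" and Q Q' :: "'j \<Rightarrow> 'q \<Rightarrow> real"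
  assumes fJ: "finite J" and fK: "finite K"
  shows "(\<Sum>i\<in>I. \<Sum>q\<in>K. ((\<Sum>j\<in>J. P i j * Q j q) - (\<Sum>j\<in>J. P' i j * Q' j q))\<^sup>2)
    \<le> 2 * ((\<Sum>i\<in>I. \<Sum>j\<in>J. (P i j - P' i j)\<^sup>2) * (\<Sum>j\<in>J. \<Sum>q\<in>K. (Q j q)\<^sup>2))
      + 2 * ((\<Sum>i\<in>I. \<Sum>j\<in>J. (P' i j)\<^sup>2) * (\<Sum>j\<in>J. \<Sum>q\<in>K. (Q j q - Q' j q)\<^sup>2))"
proof -
  have pt: "((\<Sum>j\<in>J. P i j * Q j q) - (\<Sum>j\<in>J. P' i j * Q' j q))\<^sup>2
      \<le> 2 * (\<Sum>j\<in>J. (P i j - P' i j) * Q j q)\<^sup>2 + 2 * (\<Sum>j\<in>J. P' i j * (Q j q - Q' j q))\<^sup>2" for i q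
  proof -
    have "(\<Sum>j\<in>J. P i j * Q j q) - (\<Sum>j\<in>J. P' i j * Q' j q)
        = (\<Sum>j\<in>J. (P i j - P' i j) * Q j q) + (\<Sum>j\<in>J. P' i j * (Q j q - Q' j q))"
      by (simp add: sum_subtractf[symmetric] sum.distrib[symmetric] algebra_simps)
    then show ?thesis using sq_sum2 by metis
  qed
  have "(\<Sum>i\<in>I. \<Sum>q\<in>K. ((\<Sum>j\<in>J. P i j * Q j q) - (\<Sum>j\<in>J. P' i j * Q' j q))\<^sup>2)
      \<le> (\<Sum>i\<in>I. \<Sum>q\<in>K. 2 * (\<Sum>j\<in>J. (P i j - P' i j) * Q j q)\<^sup>2 + 2 * (\<Sum>j\<in>J. P' i j * (Q j q - Q' j q))\<^sup>2)"
    by (intro sum_mono pt)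
  also have "\<dots> = 2 * (\<Sum>i\<in>I. \<Sum>q\<in>K. (\<Sum>j\<in>J. (P i j - P' i j) * Q j q)\<^sup>2)
       + 2 * (\<Sum>i\<in>I. \<Sum>q\<in>K. (\<Sum>j\<in>J. P' i j * (Q j q - Q' j q))\<^sup>2)"
    by (simp add: sum.distrib sum_distrib_left)
  also have "\<dots> \<le> 2 * ((\<Sum>i\<in>I. \<Sum>j\<in>J. (P i j - P' i j)\<^sup>2) * (\<Sum>j\<in>J. \<Sum>q\<in>K. (Q j q)\<^sup>2))
      + 2 * ((\<Sum>i\<in>I. \<Sum>j\<in>J. (P' i j)\<^sup>2) * (\<Sum>j\<in>J. \<Sum>q\<in>K. (Q j q - Q' j q)\<^sup>2))"
    using mat_mat_cs[OF fJ fK, where I=I and P="\<lambda>i j. P i j - P' i j" and Q=Q]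
      mat_mat_cs[OF fJ fK, where I=I and P=P' and Q="\<lambda>j q. Q j q - Q' j q"]
    by linarith
  finally show ?thesis .
qed

lemma outer_diff:
  fixes \<alpha> \<alpha>' :: "'t \<Rightarrow> real" and \<beta> \<beta>' :: "'a \<Rightarrow> real"
  shows "(\<Sum>t\<in>I. \<Sum>a\<in>J. (\<alpha> t * \<beta> a - \<alpha>' t * \<beta>' a)\<^sup>2)
    \<le> 2 * ((\<Sum>t\<in>I. (\<alpha> t - \<alpha>' t)\<^sup>2) * (\<Sum>a\<in>J. (\<beta> a)\<^sup>2)) + 2 * ((\<Sum>t\<in>I. (\<alpha>' t)\<^sup>2) * (\<Sum>a\<in>J. (\<beta> a - \<beta>' a)\<^sup>2))"
proof -
  have pt: "(\<alpha> t * \<beta> a - \<alpha>' t * \<beta>' a)\<^sup>2 \<le> 2 * ((\<alpha> t - \<alpha>' t)\<^sup>2 * (\<beta> a)\<^sup>2) + 2 * ((\<alpha>' t)\<^sup>2 * (\<beta> a - \<beta>' a)\<^sup>2)" for t a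
  proof -
    have "\<alpha> t * \<beta> a - \<alpha>' t * \<beta>' a = (\<alpha> t - \<alpha>' t) * \<beta> a + \<alpha>' t * (\<beta> a - \<beta>' a)"
      by (simp add: algebra_simps)
    then show ?thesis using sq_sum2 by (metis power_mult_distrib)
  qed
  have "(\<Sum>t\<in>I. \<Sum>a\<in>J. (\<alpha> t * \<beta> a - \<alpha>' t * \<beta>' a)\<^sup>2)
     \<le> (\<Sum>t\<in>I. \<Sum>a\<in>J. 2 * ((\<alpha> t - \<alpha>' t)\<^sup>2 * (\<beta> a)\<^sup>2) + 2 * ((\<alpha>' t)\<^sup>2 * (\<beta> a - \<beta>' a)\<^sup>2))"
    by (intro sum_mono pt)
  also have "\<dots> = 2 * ((\<Sum>t\<in>I. (\<alpha> t - \<alpha>' t)\<^sup>2) * (\<Sum>a\<in>J. (\<beta> a)\<^sup>2)) + 2 * ((\<Sum>t\<in>I. (\<alpha>' t)\<^sup>2) * (\<Sum>a\<in>J. (\<beta> a - \<beta>' a)\<^sup>2))"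
  proof -
    have h: "\<And>(f :: 't \<Rightarrow> real) (g :: 'a \<Rightarrow> real). (\<Sum>t\<in>I. \<Sum>a\<in>J. 2 * (f t * g a)) = 2 * ((\<Sum>t\<in>I. f t) * (\<Sum>a\<in>J. g a))"
      by (unfold sum_product) (simp only: sum_distrib_left)
    show ?thesis by (simp only: sum.distrib h)
  qed
  finally show ?thesis .
qed

lemma norm_S_sq: "(\<Sum>p<r_dim n. (xv n S p)\<^sup>2) = (norm_S n S)\<^sup>2"
proof -
  have "(norm_S n S)\<^sup>2 = sum_list (map (\<lambda>x. x\<^sup>2) (hvec n S))"
    by (auto simp: norm_S_def intro!: sum_list_nonneg)
  also have "\<dots> = (\<Sum>p<r_dim n. (xv n S p)\<^sup>2)"
    by (simp add: sum_list_sum_nth len_hvec xv_def lessThan_atLeast0)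
  finally show ?thesis by simp
qed

lemma zf_diff:
  "(zf n S X a - zf n S Y a)\<^sup>2 \<le> 2 * (1 + (norm_S n S)\<^sup>2) *
     ((\<Sum>p<r_dim n. (pA X a p - pA Y a p)\<^sup>2) + (pb X a - pb Y a)\<^sup>2)"
proof -
  define u where "u = (\<Sum>p<r_dim n. (pA X a p - pA Y a p) * xv n S p)"
  define v where "v = pb X a - pb Y a"
  define P where "P = (\<Sum>p<r_dim n. (pA X a p - pA Y a p)\<^sup>2)"
  define w where "w = (norm_S n S)\<^sup>2"
  have e: "zf n S X a - zf n S Y a = u + v"
    by (simp add: zf_def u_def v_def sum_subtractf[symmetric] algebra_simps)
  have u2: "u\<^sup>2 \<le> P * w"
    unfolding u_def P_def w_def norm_S_sq[symmetric] by (rule Cauchy_Schwarz_ineq_sum)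
  have P0: "0 \<le> P" unfolding P_def by (simp add: sum_nonneg)
  have w0: "0 \<le> w" unfolding w_def by simp
  have "(u + v)\<^sup>2 \<le> 2 * u\<^sup>2 + 2 * v\<^sup>2" by (rule sq_sum2)
  also have "\<dots> \<le> 2 * (P * w) + 2 * v\<^sup>2" using u2 by simp
  also have "\<dots> \<le> 2 * (1 + w) * (P + v\<^sup>2)"
  proof -
    have "0 \<le> w * v\<^sup>2" using w0 by simp
    then show ?thesis using P0 by (simp add: algebra_simps)
  qed
  finally show ?thesis unfolding e P_def v_def w_def .
qed

lemma sq_le_of_abs: "\<bar>a\<bar> \<le> b \<Longrightarrow> (a::real)\<^sup>2 \<le> b\<^sup>2"
  by (metis abs_ge_zero power2_abs power_mono)

definition cAb :: "nat \<Rightarrow> nat \<Rightarrow> params \<Rightarrow> real" where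
  "cAb n l X = (\<Sum>a<l. (\<Sum>p<r_dim n. (pA X a p)\<^sup>2) + (pb X a)\<^sup>2)"
definition cC :: "nat \<Rightarrow> nat \<Rightarrow> nat \<Rightarrow> params \<Rightarrow> real" where
  "cC n k l X = (\<Sum>t<n*k. \<Sum>a<l. (pC X t a)\<^sup>2)"
definition cd :: "nat \<Rightarrow> nat \<Rightarrow> params \<Rightarrow> real" where
  "cd n k X = (\<Sum>t<n*k. (pd X t)\<^sup>2)"

lemma psq_split: "psq n k l X = cAb n l X + cC n k l X + cd n k X"
  by (simp add: psq_def cAb_def cC_def cd_def sum.distrib)

lemma comp_nonneg: "0 \<le> cAb n l X" "0 \<le> cC n k l X" "0 \<le> cd n k X"
  by (simp_all add: cAb_def cC_def cd_def sum_nonneg add_nonneg_nonneg)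

lemma comp_le_psq: "cAb n l X \<le> psq n k l X" "cC n k l X \<le> psq n k l X" "cd n k X \<le> psq n k l X"
  using comp_nonneg(1)[of n l X] comp_nonneg(2)[of n k l X] comp_nonneg(3)[of n k X] unfolding psq_split by linarith+

lemma e_le_cAb: "a < l \<Longrightarrow> (\<Sum>p<r_dim n. (pA X a p)\<^sup>2) + (pb X a)\<^sup>2 \<le> cAb n l X"
  unfolding cAb_def
  by (rule member_le_sum[of a "{..<l}" "\<lambda>a. (\<Sum>p<r_dim n. (pA X a p)\<^sup>2) + (pb X a)\<^sup>2", simplified])
     (auto intro!: add_nonneg_nonneg sum_nonneg)

locale lipctx =
  fixes \<sigma> \<sigma>1 \<sigma>2 \<mu>1 \<mu>2 :: "real \<Rightarrow> real" and s1 s2 m2 :: real and l :: nat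
  assumes sb: "\<forall>x. \<bar>\<sigma> x\<bar> \<le> 1" and ds: "\<forall>x. (\<sigma> has_real_derivative \<sigma>1 x) (at x)"
    and ds1: "\<forall>x. (\<sigma>1 has_real_derivative \<sigma>2 x) (at x)"
    and s1b: "\<forall>x. \<bar>\<sigma>1 x\<bar> \<le> s1" and s2b: "\<forall>x. \<bar>\<sigma>2 x\<bar> \<le> s2"
    and dm1: "\<forall>x. (\<mu>1 has_real_derivative \<mu>2 x) (at x)" and m1b: "\<forall>x. \<bar>\<mu>1 x\<bar> \<le> 1"
    and m2b: "\<forall>x. \<bar>\<mu>2 x\<bar> \<le> m2" and l1: "1 \<le> l"
begin

lemma s1_nonneg: "0 \<le> s1" using s1b by (meson abs_ge_zero order_trans)
lemma s2_nonneg: "0 \<le> s2" using s2b by (meson abs_ge_zero order_trans)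
lemma m2_nonneg: "0 \<le> m2" using m2b by (meson abs_ge_zero order_trans)

lemma sig_d: "(\<sigma> x - \<sigma> y)\<^sup>2 \<le> s1\<^sup>2 * (x - y)\<^sup>2"
proof -
  have "\<bar>\<sigma> x - \<sigma> y\<bar> \<le> s1 * \<bar>x - y\<bar>" by (rule lip_deriv) (use ds s1b in auto)
  then have "(\<sigma> x - \<sigma> y)\<^sup>2 \<le> (s1 * \<bar>x - y\<bar>)\<^sup>2" by (rule sq_le_of_abs)
  then show ?thesis by (simp add: power_mult_distrib)
qed

lemma sig1_d: "(\<sigma>1 x - \<sigma>1 y)\<^sup>2 \<le> s2\<^sup>2 * (x - y)\<^sup>2"
proof -
  have "\<bar>\<sigma>1 x - \<sigma>1 y\<bar> \<le> s2 * \<bar>x - y\<bar>" by (rule lip_deriv) (use ds1 s2b in auto)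
  then have "(\<sigma>1 x - \<sigma>1 y)\<^sup>2 \<le> (s2 * \<bar>x - y\<bar>)\<^sup>2" by (rule sq_le_of_abs)
  then show ?thesis by (simp add: power_mult_distrib)
qed

lemma mu1_d: "(\<mu>1 x - \<mu>1 y)\<^sup>2 \<le> m2\<^sup>2 * (x - y)\<^sup>2"
proof -
  have "\<bar>\<mu>1 x - \<mu>1 y\<bar> \<le> m2 * \<bar>x - y\<bar>" by (rule lip_deriv) (use dm1 m2b in auto)
  then have "(\<mu>1 x - \<mu>1 y)\<^sup>2 \<le> (m2 * \<bar>x - y\<bar>)\<^sup>2" by (rule sq_le_of_abs)
  then show ?thesis by (simp add: power_mult_distrib)
qed

lemma sig_sq: "(\<sigma> x)\<^sup>2 \<le> 1"
  using sq_le_of_abs[of "\<sigma> x" 1] sb by simp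

lemma sig1_sq: "(\<sigma>1 x)\<^sup>2 \<le> s1\<^sup>2"
  using sq_le_of_abs[of "\<sigma>1 x" s1] s1b by simp

lemma mu1_sq: "(\<mu>1 x)\<^sup>2 \<le> 1"
  using sq_le_of_abs[of "\<mu>1 x" 1] m1b by simp

lemma sum_sig_sq: "(\<Sum>a<l. (\<sigma> (z a))\<^sup>2) \<le> real l"
proof -
  have "(\<Sum>a<l. (\<sigma> (z a))\<^sup>2) \<le> (\<Sum>a<l. 1)" by (rule sum_mono) (rule sig_sq)
  then show ?thesis by simp
qed

lemma zdiff_le: "a < l \<Longrightarrow> (zf n S X a - zf n S Y a)\<^sup>2 \<le> 2 * (1 + (norm_S n S)\<^sup>2) * cAb n l (psub X Y)"
proof -
  assume a: "a < l"
  have "(zf n S X a - zf n S Y a)\<^sup>2 \<le> 2 * (1 + (norm_S n S)\<^sup>2) *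
     ((\<Sum>p<r_dim n. (pA X a p - pA Y a p)\<^sup>2) + (pb X a - pb Y a)\<^sup>2)" by (rule zf_diff)
  also have "\<dots> \<le> 2 * (1 + (norm_S n S)\<^sup>2) * cAb n l (psub X Y)"
    using e_le_cAb[OF a, where n=n and X="psub X Y"] by (intro mult_left_mono) auto
  finally show ?thesis .
qed

lemma SD_bound: "(\<Sum>a<l. (\<sigma> (zf n S X a) - \<sigma> (zf n S Y a))\<^sup>2) \<le> 2 * s1\<^sup>2 * (1 + (norm_S n S)\<^sup>2) * cAb n l (psub X Y)"
proof -
  have h1: "(\<Sum>a<l. (\<sigma> (zf n S X a) - \<sigma> (zf n S Y a))\<^sup>2) \<le> s1\<^sup>2 * (\<Sum>a<l. (zf n S X a - zf n S Y a)\<^sup>2)"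
    unfolding sum_distrib_left by (rule sum_mono) (rule sig_d)
  have "(\<Sum>a<l. (zf n S X a - zf n S Y a)\<^sup>2) \<le> (\<Sum>a<l. ((\<Sum>p<r_dim n. (pA X a p - pA Y a p)\<^sup>2) + (pb X a - pb Y a)\<^sup>2) * (2 * (1 + (norm_S n S)\<^sup>2)))"
    by (rule sum_mono) (metis zf_diff mult.commute)
  also have "\<dots> = cAb n l (psub X Y) * (2 * (1 + (norm_S n S)\<^sup>2))"
    by (simp add: cAb_def sum_distrib_right)
  finally have h2: "(\<Sum>a<l. (zf n S X a - zf n S Y a)\<^sup>2) \<le> cAb n l (psub X Y) * (2 * (1 + (norm_S n S)\<^sup>2))" .
  have "s1\<^sup>2 * (\<Sum>a<l. (zf n S X a - zf n S Y a)\<^sup>2) \<le> s1\<^sup>2 * (cAb n l (psub X Y) * (2 * (1 + (norm_S n S)\<^sup>2)))"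
    using h2 by (rule mult_left_mono) simp
  moreover have "s1\<^sup>2 * (cAb n l (psub X Y) * (2 * (1 + (norm_S n S)\<^sup>2))) = 2 * s1\<^sup>2 * (1 + (norm_S n S)\<^sup>2) * cAb n l (psub X Y)"
    by (simp only: mult_ac)
  ultimately show ?thesis using h1 by linarith
qed

lemma N_bound: "(\<Sum>t<n*k. (net \<sigma> n l S X t)\<^sup>2) \<le> 2 * real l * psq n k l X"
proof -
  have pt: "(net \<sigma> n l S X t)\<^sup>2 \<le> 2 * real l * (\<Sum>a<l. (pC X t a)\<^sup>2) + 2 * (pd X t)\<^sup>2" for t
  proof -
    have "(net \<sigma> n l S X t)\<^sup>2 \<le> 2 * (\<Sum>a<l. pC X t a * \<sigma> (zf n S X a))\<^sup>2 + 2 * (pd X t)\<^sup>2"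
      unfolding net_acc by (rule sq_sum2)
    also have "(\<Sum>a<l. pC X t a * \<sigma> (zf n S X a))\<^sup>2 \<le> (\<Sum>a<l. (pC X t a)\<^sup>2) * (\<Sum>a<l. (\<sigma> (zf n S X a))\<^sup>2)"
      by (rule Cauchy_Schwarz_ineq_sum)
    also have "\<dots> \<le> (\<Sum>a<l. (pC X t a)\<^sup>2) * real l"
      by (intro mult_left_mono sum_sig_sq) (simp add: sum_nonneg)
    finally show ?thesis by (simp add: mult_ac)
  qed
  have "(\<Sum>t<n*k. (net \<sigma> n l S X t)\<^sup>2) \<le> (\<Sum>t<n*k. 2 * real l * (\<Sum>a<l. (pC X t a)\<^sup>2) + 2 * (pd X t)\<^sup>2)"
    by (rule sum_mono) (rule pt)
  also have "\<dots> = 2 * real l * cC n k l X + 2 * cd n k X"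
    by (simp add: cC_def cd_def sum.distrib sum_distrib_left)
  also have "\<dots> \<le> 2 * real l * psq n k l X"
  proof -
    have "cd n k X \<le> real l * cd n k X" using l1 comp_nonneg(3)[of n k X]
      by (simp add: mult_le_cancel_right1)
    moreover have "real l * cAb n l X \<ge> 0" using comp_nonneg(1)[of n l X] by simp
    ultimately show ?thesis unfolding psq_split by (simp add: algebra_simps)
  qed
  finally show ?thesis .
qed

lemma dN_bound: "(\<Sum>t<n*k. (net \<sigma> n l S X t - net \<sigma> n l S Y t)\<^sup>2)
   \<le> 3 * real l * cC n k l (psub X Y) + 3 * cC n k l Y * (\<Sum>a<l. (\<sigma> (zf n S X a) - \<sigma> (zf n S Y a))\<^sup>2)
     + 3 * cd n k (psub X Y)"
proof -
  define SD where "SD = (\<Sum>a<l. (\<sigma> (zf n S X a) - \<sigma> (zf n S Y a))\<^sup>2)"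
  have pt: "(net \<sigma> n l S X t - net \<sigma> n l S Y t)\<^sup>2 \<le> 3 * real l * (\<Sum>a<l. (pC X t a - pC Y t a)\<^sup>2)
     + 3 * (\<Sum>a<l. (pC Y t a)\<^sup>2) * SD + 3 * (pd X t - pd Y t)\<^sup>2" for t
  proof -
    have e: "net \<sigma> n l S X t - net \<sigma> n l S Y t = (\<Sum>a<l. (pC X t a - pC Y t a) * \<sigma> (zf n S X a))
       + (\<Sum>a<l. pC Y t a * (\<sigma> (zf n S X a) - \<sigma> (zf n S Y a))) + (pd X t - pd Y t)"
      by (simp add: net_acc sum_subtractf[symmetric] sum.distrib[symmetric] algebra_simps)
    have c1: "(\<Sum>a<l. (pC X t a - pC Y t a) * \<sigma> (zf n S X a))\<^sup>2 \<le> (\<Sum>a<l. (pC X t a - pC Y t a)\<^sup>2) * real l"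
    proof -
      have "(\<Sum>a<l. (pC X t a - pC Y t a) * \<sigma> (zf n S X a))\<^sup>2 \<le> (\<Sum>a<l. (pC X t a - pC Y t a)\<^sup>2) * (\<Sum>a<l. (\<sigma> (zf n S X a))\<^sup>2)"
        by (rule Cauchy_Schwarz_ineq_sum)
      also have "\<dots> \<le> (\<Sum>a<l. (pC X t a - pC Y t a)\<^sup>2) * real l"
        by (intro mult_left_mono sum_sig_sq) (simp add: sum_nonneg)
      finally show ?thesis .
    qed
    have c2: "(\<Sum>a<l. pC Y t a * (\<sigma> (zf n S X a) - \<sigma> (zf n S Y a)))\<^sup>2 \<le> (\<Sum>a<l. (pC Y t a)\<^sup>2) * SD"
      unfolding SD_def by (rule Cauchy_Schwarz_ineq_sum)
    have c1': "(\<Sum>a<l. (pC X t a - pC Y t a) * \<sigma> (zf n S X a))\<^sup>2 \<le> real l * (\<Sum>a<l. (pC X t a - pC Y t a)\<^sup>2)"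
      using c1 by (simp add: mult.commute)
    show ?thesis unfolding e using sq_sum3[of "\<Sum>a<l. (pC X t a - pC Y t a) * \<sigma> (zf n S X a)"
       "\<Sum>a<l. pC Y t a * (\<sigma> (zf n S X a) - \<sigma> (zf n S Y a))" "pd X t - pd Y t"] c1' c2
      by linarith
  qed
  have "(\<Sum>t<n*k. (net \<sigma> n l S X t - net \<sigma> n l S Y t)\<^sup>2) \<le> (\<Sum>t<n*k. 3 * real l * (\<Sum>a<l. (pC X t a - pC Y t a)\<^sup>2)
     + 3 * (\<Sum>a<l. (pC Y t a)\<^sup>2) * SD + 3 * (pd X t - pd Y t)\<^sup>2)"
    by (rule sum_mono) (rule pt)
  also have "\<dots> = 3 * real l * cC n k l (psub X Y) + 3 * cC n k l Y * SD + 3 * cd n k (psub X Y)"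
    by (simp add: cC_def cd_def sum.distrib sum_distrib_left sum_distrib_right)
  finally show ?thesis unfolding SD_def .
qed

end

lemma MM_eq: "(\<Sum>i<n. \<Sum>q<k. (Mf \<sigma> n k l S X i q)\<^sup>2) = (\<Sum>t<n*k. (net \<sigma> n l S X t)\<^sup>2)"
  by (simp add: Mf_def sum_mult_reindex)

lemma dMM_eq: "(\<Sum>i<n. \<Sum>q<k. (Mf \<sigma> n k l S X i q - Mf \<sigma> n k l S Y i q)\<^sup>2)
   = (\<Sum>t<n*k. (net \<sigma> n l S X t - net \<sigma> n l S Y t)\<^sup>2)"
  by (simp add: Mf_def sum_mult_reindex)

lemma Z_bound: "(\<Sum>i<n. \<Sum>j<n. (Zf \<sigma> n k l S X i j - Zf \<sigma> n k l S Y i j)\<^sup>2)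
  \<le> 2 * ((\<Sum>i<n. \<Sum>q<k. (Mf \<sigma> n k l S X i q - Mf \<sigma> n k l S Y i q)\<^sup>2) * (\<Sum>i<n. \<Sum>q<k. (Mf \<sigma> n k l S X i q)\<^sup>2))
   + 2 * ((\<Sum>i<n. \<Sum>q<k. (Mf \<sigma> n k l S Y i q)\<^sup>2) * (\<Sum>i<n. \<Sum>q<k. (Mf \<sigma> n k l S X i q - Mf \<sigma> n k l S Y i q)\<^sup>2))"
proof -
  let ?M = "Mf \<sigma> n k l S X" and ?M' = "Mf \<sigma> n k l S Y"
  have e: "Zf \<sigma> n k l S X i j - Zf \<sigma> n k l S Y i j = (\<Sum>q<k. ?M i q * (\<lambda>q j. ?M j q) q j) - (\<Sum>q<k. ?M' i q * (\<lambda>q j. ?M' j q) q j)" for i j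
    by (simp add: Zf_def)
  have "(\<Sum>i<n. \<Sum>j<n. (Zf \<sigma> n k l S X i j - Zf \<sigma> n k l S Y i j)\<^sup>2)
     \<le> 2 * ((\<Sum>i<n. \<Sum>q<k. (?M i q - ?M' i q)\<^sup>2) * (\<Sum>q<k. \<Sum>j<n. (?M j q)\<^sup>2))
      + 2 * ((\<Sum>i<n. \<Sum>q<k. (?M' i q)\<^sup>2) * (\<Sum>q<k. \<Sum>j<n. (?M j q - ?M' j q)\<^sup>2))"
    unfolding e by (rule prod_diff) auto
  also have "(\<Sum>q<k. \<Sum>j<n. (?M j q)\<^sup>2) = (\<Sum>i<n. \<Sum>q<k. (?M i q)\<^sup>2)" by (rule sum.swap)
  also have "(\<Sum>q<k. \<Sum>j<n. (?M j q - ?M' j q)\<^sup>2) = (\<Sum>i<n. \<Sum>q<k. (?M i q - ?M' i q)\<^sup>2)" by (rule sum.swap)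
  finally show ?thesis .
qed

lemma V_diff:
  fixes w w' :: "nat \<Rightarrow> nat \<Rightarrow> real"
  shows "(\<Sum>i<n. \<Sum>j<n. ((w i j + w j i) - (w' i j + w' j i))\<^sup>2) \<le> 4 * (\<Sum>i<n. \<Sum>j<n. (w i j - w' i j)\<^sup>2)"
proof -
  have "(\<Sum>i<n. \<Sum>j<n. ((w i j + w j i) - (w' i j + w' j i))\<^sup>2)
     \<le> (\<Sum>i<n. \<Sum>j<n. 2 * (w i j - w' i j)\<^sup>2 + 2 * (w j i - w' j i)\<^sup>2)"
  proof (intro sum_mono)
    fix i j
    have "(w i j + w j i) - (w' i j + w' j i) = (w i j - w' i j) + (w j i - w' j i)" by simp
    then show "((w i j + w j i) - (w' i j + w' j i))\<^sup>2 \<le> 2 * (w i j - w' i j)\<^sup>2 + 2 * (w j i - w' j i)\<^sup>2"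
      using sq_sum2 by metis
  qed
  also have "\<dots> = 2 * (\<Sum>i<n. \<Sum>j<n. (w i j - w' i j)\<^sup>2) + 2 * (\<Sum>i<n. \<Sum>j<n. (w j i - w' j i)\<^sup>2)"
    by (simp add: sum.distrib sum_distrib_left)
  also have "(\<Sum>i<n. \<Sum>j<n. (w j i - w' j i)\<^sup>2) = (\<Sum>i<n. \<Sum>j<n. (w i j - w' i j)\<^sup>2)" by (rule sum.swap)
  finally show ?thesis by simp
qed

lemma reidx_sq: "(\<Sum>t<n*k. (Et \<sigma> \<mu>1 n k l S X t)\<^sup>2) = (\<Sum>i<n. \<Sum>q<k. (Ef \<sigma> \<mu>1 n k l S X i q)\<^sup>2)"
  unfolding Et_def by (rule reindex_divmod[where g="\<lambda>i q. (Ef \<sigma> \<mu>1 n k l S X i q)\<^sup>2"])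

lemma reidx_dsq: "(\<Sum>t<n*k. (Et \<sigma> \<mu>1 n k l S X t - Et \<sigma> \<mu>1 n k l S Y t)\<^sup>2)
    = (\<Sum>i<n. \<Sum>q<k. (Ef \<sigma> \<mu>1 n k l S X i q - Ef \<sigma> \<mu>1 n k l S Y i q)\<^sup>2)"
  unfolding Et_def by (rule reindex_divmod[where g="\<lambda>i q. (Ef \<sigma> \<mu>1 n k l S X i q - Ef \<sigma> \<mu>1 n k l S Y i q)\<^sup>2"])

lemma E_bound: "(\<Sum>i<n. \<Sum>q<k. (Ef \<sigma> \<mu>1 n k l S X i q - Ef \<sigma> \<mu>1 n k l S Y i q)\<^sup>2)
  \<le> 2 * ((\<Sum>i<n. \<Sum>j<n. ((\<mu>1 (Zf \<sigma> n k l S X i j) + \<mu>1 (Zf \<sigma> n k l S X j i)) - (\<mu>1 (Zf \<sigma> n k l S Y i j) + \<mu>1 (Zf \<sigma> n k l S Y j i)))\<^sup>2)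
      * (\<Sum>i<n. \<Sum>q<k. (Mf \<sigma> n k l S X i q)\<^sup>2))
   + 2 * ((\<Sum>i<n. \<Sum>j<n. (\<mu>1 (Zf \<sigma> n k l S Y i j) + \<mu>1 (Zf \<sigma> n k l S Y j i))\<^sup>2)
      * (\<Sum>i<n. \<Sum>q<k. (Mf \<sigma> n k l S X i q - Mf \<sigma> n k l S Y i q)\<^sup>2))"
  unfolding Ef_def by (rule prod_diff) auto

lemma E2_bound: "(\<Sum>i<n. \<Sum>q<k. (Ef \<sigma> \<mu>1 n k l S X i q)\<^sup>2)
  \<le> (\<Sum>i<n. \<Sum>j<n. (\<mu>1 (Zf \<sigma> n k l S X i j) + \<mu>1 (Zf \<sigma> n k l S X j i))\<^sup>2) * (\<Sum>i<n. \<Sum>q<k. (Mf \<sigma> n k l S X i q)\<^sup>2)"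
  unfolding Ef_def by (rule mat_mat_cs) auto

lemma u_bound: "(\<Sum>a<l. (uf \<sigma> \<mu>1 n k l S X a - uf \<sigma> \<mu>1 n k l S Y a)\<^sup>2)
  \<le> 2 * ((\<Sum>t<n*k. (Et \<sigma> \<mu>1 n k l S X t - Et \<sigma> \<mu>1 n k l S Y t)\<^sup>2) * cC n k l X)
   + 2 * ((\<Sum>t<n*k. (Et \<sigma> \<mu>1 n k l S Y t)\<^sup>2) * cC n k l (psub X Y))"
proof -
  have "(\<Sum>i\<in>{0::nat}. \<Sum>a<l. ((\<Sum>t<n*k. (\<lambda>i t. Et \<sigma> \<mu>1 n k l S X t) i t * pC X t a) - (\<Sum>t<n*k. (\<lambda>i t. Et \<sigma> \<mu>1 n k l S Y t) i t * pC Y t a))\<^sup>2)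
    \<le> 2 * ((\<Sum>i\<in>{0::nat}. \<Sum>t<n*k. ((\<lambda>i t. Et \<sigma> \<mu>1 n k l S X t) i t - (\<lambda>i t. Et \<sigma> \<mu>1 n k l S Y t) i t)\<^sup>2) * (\<Sum>t<n*k. \<Sum>a<l. (pC X t a)\<^sup>2))
      + 2 * ((\<Sum>i\<in>{0::nat}. \<Sum>t<n*k. ((\<lambda>i t. Et \<sigma> \<mu>1 n k l S Y t) i t)\<^sup>2) * (\<Sum>t<n*k. \<Sum>a<l. (pC X t a - pC Y t a)\<^sup>2))"
    by (rule prod_diff) auto
  then show ?thesis by (simp add: uf_def cC_def)
qed

lemma U2_bound: "(\<Sum>a<l. (uf \<sigma> \<mu>1 n k l S X a)\<^sup>2) \<le> (\<Sum>t<n*k. (Et \<sigma> \<mu>1 n k l S X t)\<^sup>2) * cC n k l X"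
  unfolding uf_def cC_def by (rule vec_mat_cs) auto

definition gbf where "gbf \<sigma> \<sigma>1 \<mu>1 n k l S X Y = (\<Sum>a<l. (\<sigma>1 (zf n S X a) * uf \<sigma> \<mu>1 n k l S X a - \<sigma>1 (zf n S Y a) * uf \<sigma> \<mu>1 n k l S Y a)\<^sup>2)"

lemma grad_split: "psq n k l (psub (grad \<sigma> \<sigma>1 \<mu>1 n k l S X) (grad \<sigma> \<sigma>1 \<mu>1 n k l S Y))
  = gbf \<sigma> \<sigma>1 \<mu>1 n k l S X Y * (norm_S n S)\<^sup>2 + gbf \<sigma> \<sigma>1 \<mu>1 n k l S X Y
   + (\<Sum>t<n*k. \<Sum>a<l. (Et \<sigma> \<mu>1 n k l S X t * \<sigma> (zf n S X a) - Et \<sigma> \<mu>1 n k l S Y t * \<sigma> (zf n S Y a))\<^sup>2)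
   + (\<Sum>t<n*k. (Et \<sigma> \<mu>1 n k l S X t - Et \<sigma> \<mu>1 n k l S Y t)\<^sup>2)"
proof -
  have "(\<Sum>a<l. \<Sum>p<r_dim n. (\<sigma>1 (zf n S X a) * uf \<sigma> \<mu>1 n k l S X a * xv n S p - \<sigma>1 (zf n S Y a) * uf \<sigma> \<mu>1 n k l S Y a * xv n S p)\<^sup>2)
     = (\<Sum>a<l. \<Sum>p<r_dim n. (\<sigma>1 (zf n S X a) * uf \<sigma> \<mu>1 n k l S X a - \<sigma>1 (zf n S Y a) * uf \<sigma> \<mu>1 n k l S Y a)\<^sup>2 * (xv n S p)\<^sup>2)"
    by (simp add: power_mult_distrib left_diff_distrib[symmetric])
  also have "\<dots> = gbf \<sigma> \<sigma>1 \<mu>1 n k l S X Y * (norm_S n S)\<^sup>2"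
    by (simp only: gbf_def norm_S_sq[symmetric] sum_product)
  finally have "(\<Sum>a<l. \<Sum>p<r_dim n. (\<sigma>1 (zf n S X a) * uf \<sigma> \<mu>1 n k l S X a * xv n S p - \<sigma>1 (zf n S Y a) * uf \<sigma> \<mu>1 n k l S Y a * xv n S p)\<^sup>2)
     = gbf \<sigma> \<sigma>1 \<mu>1 n k l S X Y * (norm_S n S)\<^sup>2" .
  then show ?thesis by (simp add: psq_def grad_def gbf_def)
qed

definition Mxf :: "nat \<Rightarrow> nat \<Rightarrow> nat \<Rightarrow> real \<Rightarrow> real \<Rightarrow> real" where
  "Mxf n k l D LZ = max (D ^ 4 * LZ ^ 4) (max (real l * D ^ 8 * LZ ^ 4) (max (real l ^ 2 * D ^ 6 * LZ ^ 2)
                  (max (real n * D ^ 2 * LZ ^ 2) (max (real n * real k * real l) (real l ^ 3 * D ^ 4)))))"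

definition Kc :: real where "Kc = 2 ^ 20"


lemma mono_help: "(x::real) \<le> Mx \<Longrightarrow> 0 \<le> Mx \<Longrightarrow> 1 \<le> N \<Longrightarrow> 0 \<le> L \<Longrightarrow> L * x \<le> N\<^sup>2 * L * Mx"
proof -
  assume a: "x \<le> Mx" "0 \<le> Mx" "1 \<le> N" "0 \<le> L"
  have "L * x \<le> L * Mx" using a by (simp add: mult_left_mono)
  also have "\<dots> \<le> N\<^sup>2 * (L * Mx)"
  proof -
    have "1 \<le> N\<^sup>2" using a(3) by (rule one_le_power)
    moreover have "0 \<le> L * Mx" using a(4,2) by (rule mult_nonneg_nonneg)
    ultimately have "1 * (L * Mx) \<le> N\<^sup>2 * (L * Mx)" by (rule mult_right_mono)
    then show ?thesis by simp
  qed
  finally show ?thesis by (simp add: mult_ac)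
qed

lemma final_arith:
  fixes q T D L N K :: real
  assumes q1: "1 \<le> q" and T1: "1 \<le> T" and D0: "0 < D" and L1: "1 \<le> L" and N1: "1 \<le> N" and K1: "1 \<le> K"
  defines "KN \<equiv> 6 * q * (L + T * D\<^sup>2)" and "KE \<equiv> 128 * q * (L\<^sup>2 * D ^ 4 + N\<^sup>2)"
    and "Mx \<equiv> max (D ^ 4 * T\<^sup>2) (max (L * D ^ 8 * T\<^sup>2) (max (L\<^sup>2 * D ^ 6 * T) (max (N * D\<^sup>2 * T) (max (N * K * L) (L ^ 3 * D ^ 4)))))"
  shows "T * (2 * q * (2 * D\<^sup>2 * (KE * KN) + 16 * N\<^sup>2 * L * D\<^sup>2) + 32 * q * T * N\<^sup>2 * L * D ^ 4)
      + 2 * L * (KE * KN) + 32 * q * N\<^sup>2 * L * D\<^sup>2 * T + KE * KN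
      \<le> 2 ^ 20 * q ^ 3 * (N\<^sup>2 * L * Mx)"
proof -
  define B where "B = N\<^sup>2 * L * Mx"
  define P1 where "P1 = (L\<^sup>2 * D ^ 4 + N\<^sup>2) * (L + T * D\<^sup>2)"
  have m1: "L ^ 3 * D ^ 4 \<le> Mx" and m2: "L\<^sup>2 * D ^ 6 * T \<le> Mx" and m3: "L * D ^ 8 * T\<^sup>2 \<le> Mx"
    and m4: "N * D\<^sup>2 * T \<le> Mx" and m5: "N * K * L \<le> Mx" and m6: "D ^ 4 * T\<^sup>2 \<le> Mx"
    unfolding Mx_def by (simp only: le_max_iff_disj order_refl simp_thms)+
  have "0 \<le> D ^ 4 * T\<^sup>2" by simp
  then have Mx0: "0 \<le> Mx" using m6 by linarith
  have L0: "0 \<le> L" using L1 by simp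
  have B0: "0 \<le> B" unfolding B_def using Mx0 L0 by simp
  have NL: "N\<^sup>2 * L * (D\<^sup>2 * T) \<le> B"
  proof -
    have "0 \<le> D\<^sup>2 * T" using T1 by simp
    then have "1 * (D\<^sup>2 * T) \<le> N * (D\<^sup>2 * T)" by (rule mult_right_mono[OF N1])
    then have "D\<^sup>2 * T \<le> N * D\<^sup>2 * T" by (simp add: mult.assoc)
    then have "D\<^sup>2 * T \<le> Mx" using m4 by linarith
    then have "N\<^sup>2 * L * (D\<^sup>2 * T) \<le> N\<^sup>2 * L * Mx" using L0 by (simp add: mult_left_mono)
    then show ?thesis by (simp add: B_def)
  qed
  have NL2: "N\<^sup>2 * L * (D ^ 4 * T\<^sup>2) \<le> B"
    unfolding B_def using m6 L0 by (simp add: mult_left_mono)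
  have b1: "L * (L\<^sup>2 * D ^ 6 * T) \<le> B" unfolding B_def by (rule mono_help[OF m2 Mx0 N1 L0])
  have b2: "L * (L * D ^ 8 * T\<^sup>2) \<le> B" unfolding B_def by (rule mono_help[OF m3 Mx0 N1 L0])
  have b3: "L * (L ^ 3 * D ^ 4) \<le> B" unfolding B_def by (rule mono_help[OF m1 Mx0 N1 L0])
  have b4: "N\<^sup>2 * L * L \<le> B"
  proof -
    have NK: "1 \<le> N * K" using mult_mono[of 1 N 1 K] N1 K1 by simp
    have "1 * L \<le> N * K * L" by (rule mult_right_mono[OF NK L0])
    then have "L \<le> N * K * L" by simp
    then have "L \<le> Mx" using m5 by linarith
    then show ?thesis unfolding B_def using L0 by (simp add: mult_left_mono)
  qed
  have b5: "N\<^sup>2 * (T\<^sup>2 * D ^ 4) \<le> B"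
  proof -
    have X0: "0 \<le> N\<^sup>2 * (T\<^sup>2 * D ^ 4)" by simp
    have "N\<^sup>2 * (T\<^sup>2 * D ^ 4) \<le> L * (N\<^sup>2 * (T\<^sup>2 * D ^ 4))" using mult_right_mono[OF L1 X0] by simp
    also have "\<dots> = N\<^sup>2 * L * (D ^ 4 * T\<^sup>2)" by (simp add: mult_ac)
    finally have "N\<^sup>2 * (T\<^sup>2 * D ^ 4) \<le> N\<^sup>2 * L * (D ^ 4 * T\<^sup>2)" .
    then show ?thesis using NL2 by linarith
  qed
  have TP: "T * D\<^sup>2 * P1 \<le> 4 * B"
  proof -
    have "T * D\<^sup>2 * P1 = L * (L\<^sup>2 * D ^ 6 * T) + L * (L * D ^ 8 * T\<^sup>2) + N\<^sup>2 * L * (D\<^sup>2 * T) + N\<^sup>2 * (T\<^sup>2 * D ^ 4)"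
      unfolding P1_def by (simp add: algebra_simps power2_eq_square power3_eq_cube eval_nat_numeral)
    then show ?thesis using b1 b2 NL b5 by linarith
  qed
  have LP: "L * P1 \<le> 4 * B"
  proof -
    have "L * P1 = L * (L ^ 3 * D ^ 4) + L * (L\<^sup>2 * D ^ 6 * T) + N\<^sup>2 * L * L + N\<^sup>2 * L * (D\<^sup>2 * T)"
      unfolding P1_def by (simp add: algebra_simps power2_eq_square power3_eq_cube eval_nat_numeral)
    then show ?thesis using b3 b1 b4 NL by linarith
  qed
  have P10: "0 \<le> P1" unfolding P1_def using L0 T1 by (simp add: add_nonneg_nonneg)
  have PP: "P1 \<le> 4 * B"
  proof -
    have "1 * P1 \<le> L * P1" by (rule mult_right_mono[OF L1 P10])
    then have "P1 \<le> L * P1" by simp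
    then show ?thesis using LP by linarith
  qed
  have eqR: "T * (2 * q * (2 * D\<^sup>2 * (KE * KN) + 16 * N\<^sup>2 * L * D\<^sup>2) + 32 * q * T * N\<^sup>2 * L * D ^ 4)
      + 2 * L * (KE * KN) + 32 * q * N\<^sup>2 * L * D\<^sup>2 * T + KE * KN
      = 3072 * (q ^ 3 * (T * D\<^sup>2 * P1)) + 64 * (q * (N\<^sup>2 * L * (D\<^sup>2 * T))) + 32 * (q * (N\<^sup>2 * L * (D ^ 4 * T\<^sup>2)))
        + 1536 * (q\<^sup>2 * (L * P1)) + 768 * (q\<^sup>2 * P1)"
    unfolding KE_def KN_def P1_def by (simp add: algebra_simps power2_eq_square power3_eq_cube eval_nat_numeral)
  have q0: "0 \<le> q" using q1 by simp
  have qq: "q \<le> q ^ 3" "q\<^sup>2 \<le> q ^ 3" using power_increasing[of 1 3 q] power_increasing[of 2 3 q] q1 by simp_all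
  have TP0: "0 \<le> T * D\<^sup>2 * P1" using T1 P10 by simp
  have NL0: "0 \<le> N\<^sup>2 * L * (D\<^sup>2 * T)" "0 \<le> N\<^sup>2 * L * (D ^ 4 * T\<^sup>2)" using L0 T1 by simp_all
  have LP0: "0 \<le> L * P1" using L0 P10 by simp
  have q30: "0 \<le> q ^ 3" using q0 by simp
  have t1: "q ^ 3 * (T * D\<^sup>2 * P1) \<le> q ^ 3 * (4 * B)" by (rule mult_left_mono[OF TP q30])
  have t2: "q * (N\<^sup>2 * L * (D\<^sup>2 * T)) \<le> q ^ 3 * B" by (rule mult_mono[OF qq(1) NL q30 NL0(1)])
  have t3: "q * (N\<^sup>2 * L * (D ^ 4 * T\<^sup>2)) \<le> q ^ 3 * B" by (rule mult_mono[OF qq(1) NL2 q30 NL0(2)])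
  have t4: "q\<^sup>2 * (L * P1) \<le> q ^ 3 * (4 * B)" by (rule mult_mono[OF qq(2) LP q30 LP0])
  have t5: "q\<^sup>2 * P1 \<le> q ^ 3 * (4 * B)" by (rule mult_mono[OF qq(2) PP q30 P10])
  have qB0: "0 \<le> q ^ 3 * B" using q0 B0 by simp
  have c4: "q ^ 3 * (4 * B) = 4 * (q ^ 3 * B)" by (rule mult.left_commute)
  have u1: "q ^ 3 * (T * D\<^sup>2 * P1) \<le> 4 * (q ^ 3 * B)" using t1 unfolding c4 .
  have u4: "q\<^sup>2 * (L * P1) \<le> 4 * (q ^ 3 * B)" using t4 unfolding c4 .
  have u5: "q\<^sup>2 * P1 \<le> 4 * (q ^ 3 * B)" using t5 unfolding c4 .
  have fin: "2 ^ 20 * q ^ 3 * (N\<^sup>2 * L * Mx) = 1048576 * (q ^ 3 * B)" unfolding B_def by simp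
  show ?thesis unfolding eqR fin using u1 t2 t3 u4 u5 qB0 by linarith
qed

context lipctx begin

lemma gb_bound: "gbf \<sigma> \<sigma>1 \<mu>1 n k l S X Y \<le> 2 * s1\<^sup>2 * (\<Sum>a<l. (uf \<sigma> \<mu>1 n k l S X a - uf \<sigma> \<mu>1 n k l S Y a)\<^sup>2)
   + 4 * s2\<^sup>2 * (1 + (norm_S n S)\<^sup>2) * cAb n l (psub X Y) * (\<Sum>a<l. (uf \<sigma> \<mu>1 n k l S Y a)\<^sup>2)"
proof -
  define T where "T = 1 + (norm_S n S)\<^sup>2"
  define A where "A = cAb n l (psub X Y)"
  let ?uX = "uf \<sigma> \<mu>1 n k l S X" and ?uY = "uf \<sigma> \<mu>1 n k l S Y"
  have pt: "(\<sigma>1 (zf n S X a) * ?uX a - \<sigma>1 (zf n S Y a) * ?uY a)\<^sup>2 \<le> 2 * s1\<^sup>2 * (?uX a - ?uY a)\<^sup>2 + 4 * s2\<^sup>2 * T * A * (?uY a)\<^sup>2"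
    if a: "a \<in> {..<l}" for a
  proof -
    have e: "\<sigma>1 (zf n S X a) * ?uX a - \<sigma>1 (zf n S Y a) * ?uY a
       = \<sigma>1 (zf n S X a) * (?uX a - ?uY a) + (\<sigma>1 (zf n S X a) - \<sigma>1 (zf n S Y a)) * ?uY a"
      by (simp add: algebra_simps)
    have h1: "(\<sigma>1 (zf n S X a) * (?uX a - ?uY a))\<^sup>2 \<le> s1\<^sup>2 * (?uX a - ?uY a)\<^sup>2"
      unfolding power_mult_distrib by (rule mult_right_mono[OF sig1_sq]) simp
    have z: "(zf n S X a - zf n S Y a)\<^sup>2 \<le> 2 * T * A" using zdiff_le[of a n S X Y] a by (simp add: T_def A_def)
    have "(\<sigma>1 (zf n S X a) - \<sigma>1 (zf n S Y a))\<^sup>2 \<le> s2\<^sup>2 * (zf n S X a - zf n S Y a)\<^sup>2" by (rule sig1_d)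
    also have "\<dots> \<le> s2\<^sup>2 * (2 * T * A)" by (rule mult_left_mono[OF z]) simp
    finally have h2: "((\<sigma>1 (zf n S X a) - \<sigma>1 (zf n S Y a)) * ?uY a)\<^sup>2 \<le> s2\<^sup>2 * (2 * T * A) * (?uY a)\<^sup>2"
      unfolding power_mult_distrib by (rule mult_right_mono) simp
    have "(\<sigma>1 (zf n S X a) * ?uX a - \<sigma>1 (zf n S Y a) * ?uY a)\<^sup>2
       \<le> 2 * (\<sigma>1 (zf n S X a) * (?uX a - ?uY a))\<^sup>2 + 2 * ((\<sigma>1 (zf n S X a) - \<sigma>1 (zf n S Y a)) * ?uY a)\<^sup>2"
      unfolding e by (rule sq_sum2)
    also have "\<dots> \<le> 2 * (s1\<^sup>2 * (?uX a - ?uY a)\<^sup>2) + 2 * (s2\<^sup>2 * (2 * T * A) * (?uY a)\<^sup>2)"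
      using h1 h2 by linarith
    finally show ?thesis by (simp add: algebra_simps)
  qed
  have "gbf \<sigma> \<sigma>1 \<mu>1 n k l S X Y \<le> (\<Sum>a<l. 2 * s1\<^sup>2 * (?uX a - ?uY a)\<^sup>2 + 4 * s2\<^sup>2 * T * A * (?uY a)\<^sup>2)"
    unfolding gbf_def by (rule sum_mono) (rule pt)
  also have "\<dots> = 2 * s1\<^sup>2 * (\<Sum>a<l. (?uX a - ?uY a)\<^sup>2) + 4 * s2\<^sup>2 * T * A * (\<Sum>a<l. (?uY a)\<^sup>2)"
    by (simp add: sum.distrib sum_distrib_left)
  finally show ?thesis by (simp add: T_def A_def)
qed

lemma gC_bound: "(\<Sum>t<n*k. \<Sum>a<l. (Et \<sigma> \<mu>1 n k l S X t * \<sigma> (zf n S X a) - Et \<sigma> \<mu>1 n k l S Y t * \<sigma> (zf n S Y a))\<^sup>2)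
   \<le> 2 * (\<Sum>t<n*k. (Et \<sigma> \<mu>1 n k l S X t - Et \<sigma> \<mu>1 n k l S Y t)\<^sup>2) * real l
    + 2 * (\<Sum>t<n*k. (Et \<sigma> \<mu>1 n k l S Y t)\<^sup>2) * (2 * s1\<^sup>2 * (1 + (norm_S n S)\<^sup>2) * cAb n l (psub X Y))"
proof -
  let ?d = "\<Sum>t<n*k. (Et \<sigma> \<mu>1 n k l S X t - Et \<sigma> \<mu>1 n k l S Y t)\<^sup>2"
  let ?e = "\<Sum>t<n*k. (Et \<sigma> \<mu>1 n k l S Y t)\<^sup>2"
  have "(\<Sum>t<n*k. \<Sum>a<l. (Et \<sigma> \<mu>1 n k l S X t * \<sigma> (zf n S X a) - Et \<sigma> \<mu>1 n k l S Y t * \<sigma> (zf n S Y a))\<^sup>2)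
     \<le> 2 * (?d * (\<Sum>a<l. (\<sigma> (zf n S X a))\<^sup>2)) + 2 * (?e * (\<Sum>a<l. (\<sigma> (zf n S X a) - \<sigma> (zf n S Y a))\<^sup>2))"
    by (rule outer_diff)
  moreover have "?d * (\<Sum>a<l. (\<sigma> (zf n S X a))\<^sup>2) \<le> ?d * real l"
    by (rule mult_left_mono[OF sum_sig_sq]) (simp add: sum_nonneg)
  moreover have "?e * (\<Sum>a<l. (\<sigma> (zf n S X a) - \<sigma> (zf n S Y a))\<^sup>2) \<le> ?e * (2 * s1\<^sup>2 * (1 + (norm_S n S)\<^sup>2) * cAb n l (psub X Y))"
    by (rule mult_left_mono[OF SD_bound]) (simp add: sum_nonneg)
  ultimately show ?thesis by (simp add: mult.assoc)
qed

lemma W_bound: "(\<Sum>i<n. \<Sum>j<n. (\<mu>1 (Zf \<sigma> n k l S X i j) - \<mu>1 (Zf \<sigma> n k l S Y i j))\<^sup>2)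
   \<le> m2\<^sup>2 * (\<Sum>i<n. \<Sum>j<n. (Zf \<sigma> n k l S X i j - Zf \<sigma> n k l S Y i j)\<^sup>2)"
  unfolding sum_distrib_left by (intro sum_mono) (rule mu1_d)

lemma Vsq_bound: "(\<Sum>i<n. \<Sum>j<n. (\<mu>1 (Zf \<sigma> n k l S Y i j) + \<mu>1 (Zf \<sigma> n k l S Y j i))\<^sup>2) \<le> 4 * (real n)\<^sup>2"
proof -
  have "(\<Sum>i<n. \<Sum>j<n. (\<mu>1 (Zf \<sigma> n k l S Y i j) + \<mu>1 (Zf \<sigma> n k l S Y j i))\<^sup>2) \<le> (\<Sum>i<n. \<Sum>j<n. (4::real))"
  proof (intro sum_mono)
    fix i j
    show "(\<mu>1 (Zf \<sigma> n k l S Y i j) + \<mu>1 (Zf \<sigma> n k l S Y j i))\<^sup>2 \<le> 4"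
      using sq_sum2[of "\<mu>1 (Zf \<sigma> n k l S Y i j)" "\<mu>1 (Zf \<sigma> n k l S Y j i)"]
        mu1_sq[of "Zf \<sigma> n k l S Y i j"] mu1_sq[of "Zf \<sigma> n k l S Y j i"] by linarith
  qed
  then show ?thesis by (simp add: power2_eq_square)
qed

end

lemma psq_le_D: "pnorm n k l X \<le> D \<Longrightarrow> psq n k l X \<le> D\<^sup>2"
  using pnorm_sq[of n k l X] pnorm_nonneg[of n k l X] power_mono[of "pnorm n k l X" D 2] by simp

context lipctx begin

lemma lip_core:
  assumes n1: "1 \<le> n" and k1: "1 \<le> k" and D0: "0 < D"
    and pX: "pnorm n k l X \<le> D" and pY: "pnorm n k l Y \<le> D"
  shows "psq n k l (psub (grad \<sigma> \<sigma>1 \<mu>1 n k l S X) (grad \<sigma> \<sigma>1 \<mu>1 n k l S Y))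
     \<le> Kc * ((1 + s1\<^sup>2) ^ 3 * (1 + s2\<^sup>2) ^ 3 * (1 + m2\<^sup>2) ^ 3) * real n ^ 2 * real l
        * Mxf n k l D (sqrt (1 + (norm_S n S)\<^sup>2)) * psq n k l (psub X Y)"
proof -
  define T where "T = 1 + (norm_S n S)\<^sup>2"
  define \<delta> where "\<delta> = psq n k l (psub X Y)"
  define A where "A = cAb n l (psub X Y)"
  define q where "q = (1 + s1\<^sup>2) * (1 + s2\<^sup>2) * (1 + m2\<^sup>2)"
  define L where "L = real l"
  define N where "N = real n"
  define D2 where "D2 = D\<^sup>2"
  have T1: "1 \<le> T" unfolding T_def by simp
  have L1: "1 \<le> L" unfolding L_def using l1 by simp
  have N1: "1 \<le> N" unfolding N_def using n1 by simp
  have D20: "0 \<le> D2" unfolding D2_def by simp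
  have d0: "0 \<le> \<delta>" unfolding \<delta>_def by (rule psq_nonneg)
  have A0: "0 \<le> A" unfolding A_def by (rule comp_nonneg)
  have Ad: "A \<le> \<delta>" unfolding A_def \<delta>_def by (rule comp_le_psq)
  have Cd: "cC n k l (psub X Y) \<le> \<delta>" unfolding \<delta>_def by (rule comp_le_psq)
  have dd: "cd n k (psub X Y) \<le> \<delta>" unfolding \<delta>_def by (rule comp_le_psq)
  have PX: "psq n k l X \<le> D2" unfolding D2_def by (rule psq_le_D[OF pX])
  have PY: "psq n k l Y \<le> D2" unfolding D2_def by (rule psq_le_D[OF pY])
  have CX: "cC n k l X \<le> D2" using comp_le_psq(2)[of n k l X] PX by linarith
  have CY: "cC n k l Y \<le> D2" using comp_le_psq(2)[of n k l Y] PY by linarith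
  have CX0: "0 \<le> cC n k l X" "0 \<le> cC n k l Y" "0 \<le> cC n k l (psub X Y)" by (rule comp_nonneg)+
  have s1q: "s1\<^sup>2 \<le> q" and s2q: "s2\<^sup>2 \<le> q" and m2q: "m2\<^sup>2 \<le> q" and q1: "1 \<le> q"
  proof -
    have a: "1 \<le> 1 + s1\<^sup>2" "1 \<le> 1 + s2\<^sup>2" "1 \<le> 1 + m2\<^sup>2" by simp_all
    have b: "1 \<le> (1 + s2\<^sup>2) * (1 + m2\<^sup>2)" "1 \<le> (1 + s1\<^sup>2) * (1 + s2\<^sup>2)" "1 \<le> (1 + s1\<^sup>2) * (1 + m2\<^sup>2)"
      using mult_mono[OF a(2) a(3)] mult_mono[OF a(1) a(2)] mult_mono[OF a(1) a(3)] by simp_all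
    have c: "0 \<le> s1\<^sup>2" "0 \<le> s2\<^sup>2" "0 \<le> m2\<^sup>2" by simp_all
    have "s1\<^sup>2 \<le> (1 + s1\<^sup>2) * ((1 + s2\<^sup>2) * (1 + m2\<^sup>2))"
      using mult_mono[of "s1\<^sup>2" "1 + s1\<^sup>2" 1 "(1 + s2\<^sup>2) * (1 + m2\<^sup>2)"] b(1) c(1) by simp
    then show "s1\<^sup>2 \<le> q" unfolding q_def by (simp add: mult.assoc)
    have "s2\<^sup>2 \<le> (1 + s2\<^sup>2) * ((1 + s1\<^sup>2) * (1 + m2\<^sup>2))"
      using mult_mono[of "s2\<^sup>2" "1 + s2\<^sup>2" 1 "(1 + s1\<^sup>2) * (1 + m2\<^sup>2)"] b(3) c(2) by simp
    then show "s2\<^sup>2 \<le> q" unfolding q_def by (simp add: mult_ac)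
    have "m2\<^sup>2 \<le> (1 + m2\<^sup>2) * ((1 + s1\<^sup>2) * (1 + s2\<^sup>2))"
      using mult_mono[of "m2\<^sup>2" "1 + m2\<^sup>2" 1 "(1 + s1\<^sup>2) * (1 + s2\<^sup>2)"] b(2) c(3) by simp
    then show "m2\<^sup>2 \<le> q" unfolding q_def by (simp add: mult_ac)
    show "1 \<le> q" unfolding q_def using mult_mono[OF a(1) b(1)] by (simp add: mult.assoc)
  qed
  have q0: "0 \<le> q" using q1 by simp
  define MMX where "MMX = (\<Sum>t<n*k. (net \<sigma> n l S X t)\<^sup>2)"
  define MMY where "MMY = (\<Sum>t<n*k. (net \<sigma> n l S Y t)\<^sup>2)"
  define dM where "dM = (\<Sum>t<n*k. (net \<sigma> n l S X t - net \<sigma> n l S Y t)\<^sup>2)"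
  have MMX0: "0 \<le> MMX" "0 \<le> MMY" "0 \<le> dM" unfolding MMX_def MMY_def dM_def by (simp_all add: sum_nonneg)
  have MMXb: "MMX \<le> 2 * L * D2"
    using N_bound[where n=n and k=k and S=S and X=X] mult_left_mono[OF PX, of "2 * real l"] unfolding MMX_def L_def by simp
  have MMYb: "MMY \<le> 2 * L * D2"
    using N_bound[where n=n and k=k and S=S and X=Y] mult_left_mono[OF PY, of "2 * real l"] unfolding MMY_def L_def by simp
  define SD where "SD = (\<Sum>a<l. (\<sigma> (zf n S X a) - \<sigma> (zf n S Y a))\<^sup>2)"
  have SD0: "0 \<le> SD" unfolding SD_def by (simp add: sum_nonneg)
  have SDb: "SD \<le> 2 * q * T * \<delta>"
  proof -
    have "SD \<le> 2 * s1\<^sup>2 * T * A" unfolding SD_def T_def A_def by (rule SD_bound)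
    also have "\<dots> \<le> 2 * q * T * \<delta>"
      using mult_mono[OF s1q Ad] A0 q0 T1 by (simp add: mult_left_mono mult_ac)
    finally show ?thesis .
  qed
  define KN where "KN = 6 * q * (L + T * D2)"
  have dMb: "dM \<le> KN * \<delta>"
  proof -
    have "dM \<le> 3 * real l * cC n k l (psub X Y) + 3 * cC n k l Y * SD + 3 * cd n k (psub X Y)"
      unfolding dM_def SD_def by (rule dN_bound)
    moreover have "real l * cC n k l (psub X Y) \<le> L * \<delta>" using Cd L1 unfolding L_def by (simp add: mult_left_mono)
    moreover have "cC n k l Y * SD \<le> D2 * (2 * q * T * \<delta>)" using mult_mono[OF CY SDb D20 SD0] .
    moreover have "cd n k (psub X Y) \<le> L * \<delta>"
    proof -
      from mult_right_mono[OF L1 d0] have "\<delta> \<le> L * \<delta>" by simp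
      then show ?thesis using dd by linarith
    qed
    moreover have "L * \<delta> \<le> q * (L * \<delta>)"
    proof -
      have "0 \<le> L * \<delta>" using L1 d0 by simp
      from mult_right_mono[OF q1 this] show ?thesis by simp
    qed
    ultimately show ?thesis unfolding KN_def by (simp add: algebra_simps)
  qed
  let ?MX = "Mf \<sigma> n k l S X" and ?MY = "Mf \<sigma> n k l S Y"
  have MMeq: "(\<Sum>i<n. \<Sum>q<k. (?MX i q)\<^sup>2) = MMX" "(\<Sum>i<n. \<Sum>q<k. (?MY i q)\<^sup>2) = MMY"
    "(\<Sum>i<n. \<Sum>q<k. (?MX i q - ?MY i q)\<^sup>2) = dM"
    unfolding MMX_def MMY_def dM_def by (rule MM_eq MM_eq dMM_eq)+
  define dZ where "dZ = (\<Sum>i<n. \<Sum>j<n. (Zf \<sigma> n k l S X i j - Zf \<sigma> n k l S Y i j)\<^sup>2)"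
  have dZb: "dZ \<le> 8 * L * D2 * dM"
  proof -
    have "dZ \<le> 2 * (dM * MMX) + 2 * (MMY * dM)" using Z_bound[where \<sigma>=\<sigma> and n=n and k=k and l=l and S=S and X=X and Y=Y] unfolding dZ_def MMeq .
    moreover have "dM * MMX \<le> dM * (2 * L * D2)" by (rule mult_left_mono[OF MMXb MMX0(3)])
    moreover have "MMY * dM \<le> (2 * L * D2) * dM" by (rule mult_right_mono[OF MMYb MMX0(3)])
    ultimately show ?thesis by (simp add: algebra_simps)
  qed
  define dW where "dW = (\<Sum>i<n. \<Sum>j<n. (\<mu>1 (Zf \<sigma> n k l S X i j) - \<mu>1 (Zf \<sigma> n k l S Y i j))\<^sup>2)"
  have dWb: "dW \<le> m2\<^sup>2 * dZ" unfolding dW_def dZ_def by (rule W_bound)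
  define dV where "dV = (\<Sum>i<n. \<Sum>j<n. ((\<mu>1 (Zf \<sigma> n k l S X i j) + \<mu>1 (Zf \<sigma> n k l S X j i)) - (\<mu>1 (Zf \<sigma> n k l S Y i j) + \<mu>1 (Zf \<sigma> n k l S Y j i)))\<^sup>2)"
  have dVb: "dV \<le> 4 * dW" unfolding dV_def dW_def by (rule V_diff)
  define VY where "VY = (\<Sum>i<n. \<Sum>j<n. (\<mu>1 (Zf \<sigma> n k l S Y i j) + \<mu>1 (Zf \<sigma> n k l S Y j i))\<^sup>2)"
  have VYb: "VY \<le> 4 * N\<^sup>2" unfolding VY_def N_def by (rule Vsq_bound)
  have VY0: "0 \<le> VY" "0 \<le> dV" unfolding VY_def dV_def by (simp_all add: sum_nonneg)
  define KE where "KE = 128 * q * (L\<^sup>2 * D2\<^sup>2 + N\<^sup>2)"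
  define dE where "dE = (\<Sum>t<n*k. (Et \<sigma> \<mu>1 n k l S X t - Et \<sigma> \<mu>1 n k l S Y t)\<^sup>2)"
  define E2Y where "E2Y = (\<Sum>t<n*k. (Et \<sigma> \<mu>1 n k l S Y t)\<^sup>2)"
  have dE0: "0 \<le> dE" "0 \<le> E2Y" unfolding dE_def E2Y_def by (simp_all add: sum_nonneg)
  have dEb: "dE \<le> KE * dM"
  proof -
    define P where "P = L\<^sup>2 * D2\<^sup>2 * dM"
    have P0: "0 \<le> P" unfolding P_def using MMX0(3) by simp
    have f1: "dE \<le> 2 * (dV * MMX) + 2 * (VY * dM)"
      using E_bound[of \<sigma> \<mu>1 n k l S X Y] unfolding dE_def reidx_dsq MMeq dV_def VY_def .
    have f2: "dV * MMX \<le> 64 * (m2\<^sup>2 * P)"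
    proof -
      have "dV \<le> 4 * (m2\<^sup>2 * (8 * L * D2 * dM))"
        using dVb dWb mult_left_mono[OF dZb, of "m2\<^sup>2"] by simp
      moreover have "0 \<le> 4 * (m2\<^sup>2 * (8 * L * D2 * dM))" using L1 D20 MMX0(3) by simp
      ultimately have "dV * MMX \<le> (4 * (m2\<^sup>2 * (8 * L * D2 * dM))) * (2 * L * D2)"
        using mult_mono[OF _ MMXb _ MMX0(1)] by blast
      also have "\<dots> = 64 * (m2\<^sup>2 * P)" unfolding P_def by (simp add: power2_eq_square mult_ac)
      finally show ?thesis .
    qed
    have f3: "VY * dM \<le> 4 * (N\<^sup>2 * dM)" using mult_right_mono[OF VYb MMX0(3)] by (simp add: mult.assoc)
    have f4: "m2\<^sup>2 * P \<le> q * P" by (rule mult_right_mono[OF m2q P0])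
    have f5: "N\<^sup>2 * dM \<le> q * (N\<^sup>2 * dM)"
    proof -
      have "0 \<le> N\<^sup>2 * dM" using MMX0(3) by simp
      from mult_right_mono[OF q1 this] show ?thesis by simp
    qed
    have f6: "0 \<le> q * (N\<^sup>2 * dM)" using q0 MMX0(3) by simp
    have eK: "KE * dM = 128 * (q * P) + 128 * (q * (N\<^sup>2 * dM))"
      unfolding KE_def P_def by (simp add: algebra_simps)
    show ?thesis unfolding eK using f1 f2 f3 f4 f5 f6 by linarith
  qed
  have E2Yb: "E2Y \<le> 8 * N\<^sup>2 * L * D2"
  proof -
    have "E2Y \<le> VY * MMY" using E2_bound[of \<sigma> \<mu>1 n k l S Y] unfolding E2Y_def reidx_sq MMeq VY_def .
    also have "\<dots> \<le> (4 * N\<^sup>2) * (2 * L * D2)" by (rule mult_mono[OF VYb MMYb]) (use MMX0 in auto)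
    finally show ?thesis by (simp add: algebra_simps)
  qed
  define dU where "dU = (\<Sum>a<l. (uf \<sigma> \<mu>1 n k l S X a - uf \<sigma> \<mu>1 n k l S Y a)\<^sup>2)"
  define U2Y where "U2Y = (\<Sum>a<l. (uf \<sigma> \<mu>1 n k l S Y a)\<^sup>2)"
  have dUb: "dU \<le> 2 * (dE * D2) + 2 * ((8 * N\<^sup>2 * L * D2) * \<delta>)"
  proof -
    have "dU \<le> 2 * (dE * cC n k l X) + 2 * (E2Y * cC n k l (psub X Y))"
      unfolding dU_def dE_def E2Y_def by (rule u_bound)
    moreover have "dE * cC n k l X \<le> dE * D2" by (rule mult_left_mono[OF CX dE0(1)])
    moreover have "E2Y * cC n k l (psub X Y) \<le> (8 * N\<^sup>2 * L * D2) * \<delta>"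
      by (rule mult_mono[OF E2Yb Cd]) (use dE0 CX0 N1 L1 D20 in auto)
    ultimately show ?thesis by linarith
  qed
  have U2Yb: "U2Y \<le> (8 * N\<^sup>2 * L * D2) * D2"
  proof -
    have "U2Y \<le> E2Y * cC n k l Y" unfolding U2Y_def E2Y_def by (rule U2_bound)
    also have "\<dots> \<le> (8 * N\<^sup>2 * L * D2) * D2" by (rule mult_mono[OF E2Yb CY]) (use CX0 N1 L1 D20 in auto)
    finally show ?thesis .
  qed
  define gb where "gb = gbf \<sigma> \<sigma>1 \<mu>1 n k l S X Y"
  define gC where "gC = (\<Sum>t<n*k. \<Sum>a<l. (Et \<sigma> \<mu>1 n k l S X t * \<sigma> (zf n S X a) - Et \<sigma> \<mu>1 n k l S Y t * \<sigma> (zf n S Y a))\<^sup>2)"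
  have gbb: "gb \<le> 2 * q * dU + 32 * q * T * N\<^sup>2 * L * D2\<^sup>2 * \<delta>"
  proof -
    have "gb \<le> 2 * s1\<^sup>2 * dU + 4 * s2\<^sup>2 * T * A * U2Y" unfolding gb_def dU_def U2Y_def T_def A_def by (rule gb_bound)
    moreover have "s1\<^sup>2 * dU \<le> q * dU" by (rule mult_right_mono[OF s1q]) (simp add: dU_def sum_nonneg)
    moreover have "s2\<^sup>2 * T * A * U2Y \<le> q * T * \<delta> * ((8 * N\<^sup>2 * L * D2) * D2)"
    proof -
      have U0: "0 \<le> U2Y" unfolding U2Y_def by (simp add: sum_nonneg)
      have "s2\<^sup>2 * T \<le> q * T" by (rule mult_right_mono[OF s2q]) (use T1 in simp)
      then have "s2\<^sup>2 * T * A \<le> q * T * \<delta>" by (rule mult_mono[OF _ Ad]) (use q0 T1 A0 in auto)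
      then show ?thesis by (rule mult_mono[OF _ U2Yb]) (use q0 T1 d0 U0 in auto)
    qed
    ultimately show ?thesis by (simp add: algebra_simps power2_eq_square)
  qed
  have gCb: "gC \<le> 2 * L * dE + 32 * q * N\<^sup>2 * L * D2 * T * \<delta>"
  proof -
    have "gC \<le> 2 * dE * real l + 2 * E2Y * (2 * s1\<^sup>2 * (1 + (norm_S n S)\<^sup>2) * cAb n l (psub X Y))"
      unfolding gC_def dE_def E2Y_def by (rule gC_bound)
    moreover have "E2Y * (s1\<^sup>2 * T * A) \<le> (8 * N\<^sup>2 * L * D2) * (q * T * \<delta>)"
    proof -
      have "s1\<^sup>2 * T \<le> q * T" by (rule mult_right_mono[OF s1q]) (use T1 in simp)
      then have "s1\<^sup>2 * T * A \<le> q * T * \<delta>" by (rule mult_mono[OF _ Ad]) (use q0 T1 A0 in auto)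
      then show ?thesis by (rule mult_mono[OF E2Yb]) (use N1 L1 D20 A0 T1 in auto)
    qed
    ultimately show ?thesis unfolding T_def A_def L_def by (simp add: algebra_simps)
  qed
  have split: "psq n k l (psub (grad \<sigma> \<sigma>1 \<mu>1 n k l S X) (grad \<sigma> \<sigma>1 \<mu>1 n k l S Y)) = gb * T + gC + dE"
    using grad_split[of n k l \<sigma> \<sigma>1 \<mu>1 S X Y] unfolding gb_def gC_def dE_def T_def by (simp add: algebra_simps)
  have KN0: "0 \<le> KN" unfolding KN_def using q0 L1 T1 D20 by simp
  have KE0: "0 \<le> KE" unfolding KE_def using q0 by simp
  have dEb2: "dE \<le> (KE * KN) * \<delta>"
    using dEb mult_left_mono[OF dMb KE0] by (simp add: mult.assoc)
  define R where "R = T * (2 * q * (2 * D\<^sup>2 * (KE * KN) + 16 * N\<^sup>2 * L * D\<^sup>2) + 32 * q * T * N\<^sup>2 * L * D ^ 4)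
      + 2 * L * (KE * KN) + 32 * q * N\<^sup>2 * L * D\<^sup>2 * T + KE * KN"
  have tot: "gb * T + gC + dE \<le> R * \<delta>"
  proof -
    have dUb2: "dU \<le> (2 * D2 * (KE * KN) + 16 * N\<^sup>2 * L * D2) * \<delta>"
      using dUb mult_right_mono[OF dEb2 D20] by (simp add: algebra_simps)
    have g1: "gb \<le> (2 * q * (2 * D2 * (KE * KN) + 16 * N\<^sup>2 * L * D2) + 32 * q * T * N\<^sup>2 * L * D2\<^sup>2) * \<delta>"
      using gbb mult_left_mono[OF dUb2, of "2 * q"] q0 by (simp add: algebra_simps)
    have g2: "gb * T \<le> ((2 * q * (2 * D2 * (KE * KN) + 16 * N\<^sup>2 * L * D2) + 32 * q * T * N\<^sup>2 * L * D2\<^sup>2) * \<delta>) * T"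
      by (rule mult_right_mono[OF g1]) (use T1 in simp)
    have h3: "L * dE \<le> L * ((KE * KN) * \<delta>)" by (rule mult_left_mono[OF dEb2]) (use L1 in simp)
    have e3: "(2 * L * (KE * KN) + 32 * q * N\<^sup>2 * L * D2 * T) * \<delta> = 2 * (L * ((KE * KN) * \<delta>)) + 32 * q * N\<^sup>2 * L * D2 * T * \<delta>"
      by (simp add: algebra_simps)
    have e3': "2 * L * dE = 2 * (L * dE)" by simp
    have g3: "gC \<le> (2 * L * (KE * KN) + 32 * q * N\<^sup>2 * L * D2 * T) * \<delta>"
      unfolding e3 using gCb h3 unfolding e3' by linarith
    have "R * \<delta> = ((2 * q * (2 * D2 * (KE * KN) + 16 * N\<^sup>2 * L * D2) + 32 * q * T * N\<^sup>2 * L * D2\<^sup>2) * \<delta>) * T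
        + (2 * L * (KE * KN) + 32 * q * N\<^sup>2 * L * D2 * T) * \<delta> + (KE * KN) * \<delta>"
      unfolding R_def D2_def by (simp add: algebra_simps power2_eq_square eval_nat_numeral)
    then show ?thesis using g2 g3 dEb2 by linarith
  qed
  define Mx where "Mx = max (D ^ 4 * T\<^sup>2) (max (L * D ^ 8 * T\<^sup>2) (max (L\<^sup>2 * D ^ 6 * T) (max (N * D\<^sup>2 * T) (max (N * real k * L) (L ^ 3 * D ^ 4)))))"
  have D4: "(D\<^sup>2)\<^sup>2 = D ^ 4" by (simp add: power2_eq_square eval_nat_numeral)
  have Rb: "R \<le> 2 ^ 20 * q ^ 3 * (N\<^sup>2 * L * Mx)"
    unfolding R_def KE_def KN_def Mx_def D2_def D4
    by (rule final_arith[OF q1 T1 D0 L1 N1]) (use k1 in simp)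
  have MxE: "Mxf n k l D (sqrt (1 + (norm_S n S)\<^sup>2)) = Mx"
  proof -
    have s2: "(sqrt T)\<^sup>2 = T" using T1 by simp
    have s4: "(sqrt T) ^ 4 = T\<^sup>2" using s2 by (metis power_mult numeral_Bit0 numeral_One mult_2 one_add_one)
    show ?thesis unfolding Mxf_def Mx_def T_def[symmetric] s2 s4 L_def N_def by simp
  qed
  have qE: "(1 + s1\<^sup>2) ^ 3 * (1 + s2\<^sup>2) ^ 3 * (1 + m2\<^sup>2) ^ 3 = q ^ 3" unfolding q_def by (simp add: power_mult_distrib)
  have "psq n k l (psub (grad \<sigma> \<sigma>1 \<mu>1 n k l S X) (grad \<sigma> \<sigma>1 \<mu>1 n k l S Y)) \<le> R * \<delta>" using split tot by simp
  also have "\<dots> \<le> (2 ^ 20 * q ^ 3 * (N\<^sup>2 * L * Mx)) * \<delta>" by (rule mult_right_mono[OF Rb d0])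
  finally show ?thesis unfolding MxE qE Kc_def \<delta>_def N_def L_def by (simp add: mult_ac)
qed

end

lemma lip_main:
  assumes "1 \<le> n" "1 \<le> k" "1 \<le> l" "D > 0" "\<forall>x. \<bar>\<sigma> x\<bar> \<le> 1"
    "\<forall>x. (\<sigma> has_real_derivative \<sigma>1 x) (at x)" "\<forall>x. (\<sigma>1 has_real_derivative \<sigma>2 x) (at x)"
    "\<forall>x. \<bar>\<sigma>1 x\<bar> \<le> s1" "\<forall>x. \<bar>\<sigma>2 x\<bar> \<le> s2"
    "\<forall>x. (\<mu>1 has_real_derivative \<mu>2 x) (at x)" "\<forall>x. \<bar>\<mu>1 x\<bar> \<le> 1" "\<forall>x. \<bar>\<mu>2 x\<bar> \<le> m2"
    "pnorm n k l X \<le> D" "pnorm n k l X' \<le> D"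
  shows "psq n k l (psub (grad \<sigma> \<sigma>1 \<mu>1 n k l S X) (grad \<sigma> \<sigma>1 \<mu>1 n k l S X'))
     \<le> Kc * ((1 + s1\<^sup>2) ^ 3 * (1 + s2\<^sup>2) ^ 3 * (1 + m2\<^sup>2) ^ 3) * real n ^ 2 * real l
        * Mxf n k l D (sqrt (1 + (norm_S n S)\<^sup>2)) * psq n k l (psub X X')"
proof -
  interpret lipctx \<sigma> \<sigma>1 \<sigma>2 \<mu>1 \<mu>2 s1 s2 m2 l
    by unfold_locales (use assms in auto)
  show ?thesis by (rule lip_core) (use assms in auto)
qed


lemma pinner_scale_self: "pinner n k l H (pscale t H) = t * psq n k l H"
  by (simp add: pinner_acc psq_def power2_eq_square sum_distrib_left algebra_simps)

lemma pgrad_unique: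
  assumes g1: "has_pgrad n k l f X G" and g2: "has_pgrad n k l f X G0"
  shows "pnorm n k l (psub G G0) = 0"
proof (rule ccontr)
  define H where "H = psub G G0"
  define p where "p = pnorm n k l H"
  assume "pnorm n k l (psub G G0) \<noteq> 0"
  then have p0: "p > 0" using pnorm_nonneg[of n k l H] unfolding p_def H_def by linarith
  obtain d1 where d1: "d1 > 0" "\<And>\<Delta>. pnorm n k l \<Delta> < d1 \<Longrightarrow>
        \<bar>f (padd X \<Delta>) - f X - pinner n k l G \<Delta>\<bar> \<le> p/4 * pnorm n k l \<Delta>"
    using g1 p0 unfolding has_pgrad_def by (meson divide_pos_pos zero_less_numeral)
  obtain d2 where d2: "d2 > 0" "\<And>\<Delta>. pnorm n k l \<Delta> < d2 \<Longrightarrow>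
        \<bar>f (padd X \<Delta>) - f X - pinner n k l G0 \<Delta>\<bar> \<le> p/4 * pnorm n k l \<Delta>"
    using g2 p0 unfolding has_pgrad_def by (meson divide_pos_pos zero_less_numeral)
  define t where "t = min d1 d2 / (2 * p)"
  have t0: "t > 0" using d1 d2 p0 by (simp add: t_def)
  define \<Delta> where "\<Delta> = pscale t H"
  have nD: "pnorm n k l \<Delta> = t * p" using t0 by (simp add: \<Delta>_def pnorm_pscale p_def)
  have "t * p = min d1 d2 / 2" using p0 by (simp add: t_def)
  then have lt: "pnorm n k l \<Delta> < d1" "pnorm n k l \<Delta> < d2" using nD d1 d2 by auto
  have "\<bar>pinner n k l G \<Delta> - pinner n k l G0 \<Delta>\<bar> \<le> p/4 * pnorm n k l \<Delta> + p/4 * pnorm n k l \<Delta>"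
    using d1(2)[OF lt(1)] d2(2)[OF lt(2)] by linarith
  moreover have "pinner n k l G \<Delta> - pinner n k l G0 \<Delta> = t * p\<^sup>2"
    using pinner_psub[of n k l G G0 \<Delta>] pinner_scale_self[of n k l H t]
    by (simp add: \<Delta>_def H_def p_def pnorm_sq)
  ultimately have "t * p\<^sup>2 \<le> t * p\<^sup>2 / 2" using nD t0 p0 by (simp add: power2_eq_square)
  then show False using t0 p0 by simp
qed

lemma pnorm_zero_acc:
  assumes "pnorm n k l (psub G G0) = 0"
  shows "psq n k l (psub G G0) = 0"
  using assms pnorm_sq[of n k l "psub G G0"] by simp

lemma pnorm_cong3:
  "pnorm n k l (psub G G') \<le> pnorm n k l (psub G G0) + pnorm n k l (psub G0 G0') + pnorm n k l (psub G0' G')"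
proof -
  have "psub G G' = padd (psub G G0) (padd (psub G0 G0') (psub G0' G'))"
    by (rule params_eqI) (simp_all add: fun_eq_iff)
  then have "pnorm n k l (psub G G') \<le> pnorm n k l (psub G G0) + pnorm n k l (padd (psub G0 G0') (psub G0' G'))"
    using pnorm_triangle by metis
  then show ?thesis using pnorm_triangle[of n k l "psub G0 G0'" "psub G0' G'"] by linarith
qed

lemma has_pgrad_from_lip:
  assumes deriv: "\<And>Y \<tau>. ((\<lambda>\<tau>. f (padd X (pscale \<tau> Y))) has_real_derivative
                   pinner n k l (G (padd X (pscale \<tau> Y))) Y) (at \<tau>)"
    and lip: "\<And>X1 X2. pnorm n k l X1 \<le> R \<Longrightarrow> pnorm n k l X2 \<le> R \<Longrightarrow>
                pnorm n k l (psub (G X1) (G X2)) \<le> Lr * pnorm n k l (psub X1 X2)"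
    and R: "pnorm n k l X + 1 \<le> R" and Lr: "0 \<le> Lr"
  shows "has_pgrad n k l f X (G X)"
  unfolding has_pgrad_def
proof (intro allI impI)
  fix \<epsilon> :: real assume e: "\<epsilon> > 0"
  define \<delta> where "\<delta> = min 1 (\<epsilon> / (Lr + 1))"
  have d0: "\<delta> > 0" using e Lr by (simp add: \<delta>_def)
  show "\<exists>\<delta>>0. \<forall>\<Delta>. pnorm n k l \<Delta> < \<delta> \<longrightarrow>
          \<bar>f (padd X \<Delta>) - f X - pinner n k l (G X) \<Delta>\<bar> \<le> \<epsilon> * pnorm n k l \<Delta>"
  proof (intro exI[of _ \<delta>] conjI allI impI d0)
    fix \<Delta> assume dl: "pnorm n k l \<Delta> < \<delta>"
    define g where "g = (\<lambda>\<tau>. f (padd X (pscale \<tau> \<Delta>)))"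
    have g1: "g 1 = f (padd X \<Delta>)"
    proof -
      have "padd X (pscale 1 \<Delta>) = padd X \<Delta>" by (rule params_eqI) (simp_all add: fun_eq_iff)
      then show ?thesis by (simp add: g_def)
    qed
    have g0: "g 0 = f X"
    proof -
      have "padd X (pscale 0 \<Delta>) = X" by (rule params_eqI) (simp_all add: fun_eq_iff)
      then show ?thesis by (simp add: g_def)
    qed
    obtain \<xi> where xi: "0 < \<xi>" "\<xi> < 1" "g 1 - g 0 = (1 - 0) * pinner n k l (G (padd X (pscale \<xi> \<Delta>))) \<Delta>"
      using MVT2[of 0 1 g "\<lambda>\<tau>. pinner n k l (G (padd X (pscale \<tau> \<Delta>))) \<Delta>"] deriv unfolding g_def by auto
    define X\<xi> where "X\<xi> = padd X (pscale \<xi> \<Delta>)"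
    have nd0: "0 \<le> pnorm n k l \<Delta>" by (rule pnorm_nonneg)
    have "pnorm n k l X\<xi> \<le> pnorm n k l X + pnorm n k l (pscale \<xi> \<Delta>)"
      unfolding X\<xi>_def by (rule pnorm_triangle)
    also have "\<dots> = pnorm n k l X + \<xi> * pnorm n k l \<Delta>" using xi by (simp add: pnorm_pscale)
    also have "\<dots> \<le> pnorm n k l X + 1"
      using xi dl nd0 \<delta>_def by (smt (verit) min.bounded_iff mult_le_one)
    finally have inR: "pnorm n k l X\<xi> \<le> R" using R by linarith
    have X0R: "pnorm n k l X \<le> R" using R by linarith
    have "\<bar>f (padd X \<Delta>) - f X - pinner n k l (G X) \<Delta>\<bar> = \<bar>pinner n k l (psub (G X\<xi>) (G X)) \<Delta>\<bar>"
      using xi g1 g0 by (simp add: pinner_psub X\<xi>_def)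
    also have "\<dots> \<le> pnorm n k l (psub (G X\<xi>) (G X)) * pnorm n k l \<Delta>" by (rule pinner_cs)
    also have "\<dots> \<le> (Lr * pnorm n k l (psub X\<xi> X)) * pnorm n k l \<Delta>"
      by (rule mult_right_mono[OF lip[OF inR X0R] nd0])
    also have "pnorm n k l (psub X\<xi> X) = \<xi> * pnorm n k l \<Delta>"
      using xi by (simp add: X\<xi>_def psub_padd_scale pnorm_pscale)
    also have "Lr * (\<xi> * pnorm n k l \<Delta>) * pnorm n k l \<Delta> \<le> Lr * \<delta> * pnorm n k l \<Delta>"
    proof -
      have "\<xi> * pnorm n k l \<Delta> \<le> \<delta>" using xi dl nd0 by (smt (verit) mult_le_cancel_right2)
      then show ?thesis using Lr nd0 by (simp add: mult_right_mono mult_left_mono)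
    qed
    also have "\<dots> \<le> \<epsilon> * pnorm n k l \<Delta>"
    proof -
      have "Lr * \<delta> \<le> \<epsilon>"
      proof -
        have "\<delta> \<le> \<epsilon> / (Lr + 1)" by (simp add: \<delta>_def)
        then have "Lr * \<delta> \<le> Lr * (\<epsilon> / (Lr + 1))" using Lr by (rule mult_left_mono)
        also have "\<dots> \<le> \<epsilon>" using Lr e by (simp add: field_simps)
        finally show ?thesis .
      qed
      then show ?thesis using nd0 by (simp add: mult_right_mono)
    qed
    finally show "\<bar>f (padd X \<Delta>) - f X - pinner n k l (G X) \<Delta>\<bar> \<le> \<epsilon> * pnorm n k l \<Delta>" .
  qed
qed

lemma psq_psub_comm: "psq n k l (psub A B) = psq n k l (psub B A)"
  by (simp add: psq_def power2_commute)

lemma pnorm_psub_comm: "pnorm n k l (psub A B) = pnorm n k l (psub B A)"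
  by (simp add: pnorm_psq psq_psub_comm)

definition ecoef :: "nat \<Rightarrow> real" where
  "ecoef i = (if i = 0 then 1 else if i = 2 then 3 else if i = 4 then 3 else if i = 6 then 1 else 0)"

lemma ecoef_sum: "(\<Sum>i\<le>6. ecoef i * x ^ i) = (1 + x\<^sup>2) ^ 3"
  by (simp add: ecoef_def eval_nat_numeral atMost_Suc power2_eq_square algebra_simps)

lemma poly3_eq: "poly3 (\<lambda>i j m. Kc * ecoef i * ecoef j * ecoef m) 6 x y z
   = Kc * ((1 + x\<^sup>2) ^ 3 * (1 + y\<^sup>2) ^ 3 * (1 + z\<^sup>2) ^ 3)"
proof -
  define B where "B = (\<Sum>j\<le>6. ecoef j * y ^ j) * (\<Sum>m\<le>6. ecoef m * z ^ m)"
  have inner: "(\<Sum>j\<le>6. \<Sum>m\<le>6. Kc * ecoef i * ecoef j * ecoef m * x ^ i * y ^ j * z ^ m)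
      = (Kc * ecoef i * x ^ i) * B" for i
    unfolding B_def sum_product by (simp add: sum_distrib_left mult_ac)
  have "poly3 (\<lambda>i j m. Kc * ecoef i * ecoef j * ecoef m) 6 x y z = (\<Sum>i\<le>6. (Kc * ecoef i * x ^ i) * B)"
    unfolding poly3_def inner ..
  also have "\<dots> = Kc * (\<Sum>i\<le>6. ecoef i * x ^ i) * B"
    by (simp add: sum_distrib_left sum_distrib_right mult_ac)
  finally show ?thesis by (simp add: B_def ecoef_sum)
qed

theorem lemma6:
  "\<exists>(c :: nat \<Rightarrow> nat \<Rightarrow> nat \<Rightarrow> real) (N :: nat).
   \<forall>(\<sigma> :: real \<Rightarrow> real) (\<sigma>1 :: real \<Rightarrow> real) (\<sigma>2 :: real \<Rightarrow> real) (s1 :: real) (s2 :: real)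
     (\<mu>d :: nat \<Rightarrow> real \<Rightarrow> real) (m2 :: real) (n :: nat) (k :: nat) (l :: nat)
     (S :: nat \<Rightarrow> nat \<Rightarrow> real) (D :: real).
     1 \<le> n \<and> 1 \<le> k \<and> k \<le> n \<and> 1 \<le> l
     \<and> (\<forall>i<n. \<forall>j<n. S i j = S j i) \<and> D > 0
     \<and> (\<forall>x. \<bar>\<sigma> x\<bar> \<le> 1)
     \<and> (\<forall>x. (\<sigma> has_real_derivative \<sigma>1 x) (at x))
     \<and> (\<forall>x. (\<sigma>1 has_real_derivative \<sigma>2 x) (at x))
     \<and> s1 > 0 \<and> (\<forall>x. \<bar>\<sigma>1 x\<bar> \<le> s1) \<and> (\<forall>x. \<bar>\<sigma>2 x\<bar> \<le> s2)
     \<and> (\<forall>j x. (\<mu>d j has_real_derivative \<mu>d (Suc j) x) (at x))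
     \<and> (\<forall>x. \<bar>\<mu>d 1 x\<bar> \<le> 1) \<and> (\<forall>x. \<bar>\<mu>d 2 x\<bar> \<le> m2)
   \<longrightarrow>
     (let f = phi_tilde \<sigma> (\<mu>d 0) n k l S;
          Cphi = poly3 c N s1 s2 m2;
          LZ = sqrt (1 + (norm_S n S)\<^sup>2);
          L = sqrt (Cphi * real n ^ 2 * real l *
                max (D ^ 4 * LZ ^ 4) (max (real l * D ^ 8 * LZ ^ 4) (max (real l ^ 2 * D ^ 6 * LZ ^ 2)
                  (max (real n * D ^ 2 * LZ ^ 2) (max (real n * real k * real l) (real l ^ 3 * D ^ 4))))))
      in 0 \<le> Cphi
         \<and> (\<forall>\<Theta>. pnorm n k l \<Theta> \<le> D \<longrightarrow> (\<exists>G. has_pgrad n k l f \<Theta> G))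
         \<and> (\<forall>\<Theta> \<Theta>' G G'. pnorm n k l \<Theta> \<le> D \<longrightarrow> pnorm n k l \<Theta>' \<le> D
              \<longrightarrow> has_pgrad n k l f \<Theta> G \<longrightarrow> has_pgrad n k l f \<Theta>' G'
              \<longrightarrow> pnorm n k l (psub G G') \<le> L * pnorm n k l (psub \<Theta> \<Theta>')))"
proof (intro exI[of _ "\<lambda>i j m. Kc * ecoef i * ecoef j * ecoef m"] exI[of _ 6] allI impI)
  fix \<sigma> \<sigma>1 \<sigma>2 :: "real \<Rightarrow> real" and s1 s2 :: real and \<mu>d :: "nat \<Rightarrow> real \<Rightarrow> real"
    and m2 :: real and n k l :: nat and S :: "nat \<Rightarrow> nat \<Rightarrow> real" and D :: real
  assume H: "1 \<le> n \<and> 1 \<le> k \<and> k \<le> n \<and> 1 \<le> l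
     \<and> (\<forall>i<n. \<forall>j<n. S i j = S j i) \<and> D > 0
     \<and> (\<forall>x. \<bar>\<sigma> x\<bar> \<le> 1)
     \<and> (\<forall>x. (\<sigma> has_real_derivative \<sigma>1 x) (at x))
     \<and> (\<forall>x. (\<sigma>1 has_real_derivative \<sigma>2 x) (at x))
     \<and> s1 > 0 \<and> (\<forall>x. \<bar>\<sigma>1 x\<bar> \<le> s1) \<and> (\<forall>x. \<bar>\<sigma>2 x\<bar> \<le> s2)
     \<and> (\<forall>j x. (\<mu>d j has_real_derivative \<mu>d (Suc j) x) (at x))
     \<and> (\<forall>x. \<bar>\<mu>d 1 x\<bar> \<le> 1) \<and> (\<forall>x. \<bar>\<mu>d 2 x\<bar> \<le> m2)"
  have n1: "1 \<le> n" and k1: "1 \<le> k" and l1: "1 \<le> l" and D0: "D > 0" using H by auto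
  have sb: "\<forall>x. \<bar>\<sigma> x\<bar> \<le> 1" and ds: "\<forall>x. (\<sigma> has_real_derivative \<sigma>1 x) (at x)"
    and ds1: "\<forall>x. (\<sigma>1 has_real_derivative \<sigma>2 x) (at x)"
    and s1b: "\<forall>x. \<bar>\<sigma>1 x\<bar> \<le> s1" and s2b: "\<forall>x. \<bar>\<sigma>2 x\<bar> \<le> s2"
    and m1b: "\<forall>x. \<bar>\<mu>d 1 x\<bar> \<le> 1" and m2b: "\<forall>x. \<bar>\<mu>d 2 x\<bar> \<le> m2"
    using H by auto
  have dm: "\<forall>j x. (\<mu>d j has_real_derivative \<mu>d (Suc j) x) (at x)" using H by auto
  have dm0: "\<And>x. (\<mu>d 0 has_real_derivative \<mu>d 1 x) (at x)" using dm by (metis One_nat_def)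
  have dm1: "\<forall>x. (\<mu>d 1 has_real_derivative \<mu>d 2 x) (at x)" using dm by (metis Suc_1)
  have ds': "\<And>x. (\<sigma> has_real_derivative \<sigma>1 x) (at x)" using ds by blast
  define Q where "Q = (1 + s1\<^sup>2) ^ 3 * (1 + s2\<^sup>2) ^ 3 * (1 + m2\<^sup>2) ^ 3"
  have Q0: "0 \<le> Q" unfolding Q_def by simp
  have K0: "0 \<le> Kc" by (simp add: Kc_def)
  define LZ where "LZ = sqrt (1 + (norm_S n S)\<^sup>2)"
  define f where "f = phi_tilde \<sigma> (\<mu>d 0) n k l S"
  define gr where "gr = grad \<sigma> \<sigma>1 (\<mu>d 1) n k l S"
  define Lf where "Lf = (\<lambda>D. sqrt (Kc * Q * real n ^ 2 * real l * Mxf n k l D LZ))"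
  have Mx0: "0 \<le> Mxf n k l D' LZ" for D'
    unfolding Mxf_def by (simp add: le_max_iff_disj)
  have P0: "0 \<le> Kc * Q * real n ^ 2 * real l * Mxf n k l D' LZ" for D'
    using K0 Q0 Mx0[of D'] by (intro mult_nonneg_nonneg) auto
  have Lf0: "0 \<le> Lf D'" for D' unfolding Lf_def using P0 by simp
  have lip: "pnorm n k l (psub (gr X1) (gr X2)) \<le> Lf D' * pnorm n k l (psub X1 X2)"
    if "D' > 0" "pnorm n k l X1 \<le> D'" "pnorm n k l X2 \<le> D'" for D' X1 X2
  proof -
    have "psq n k l (psub (gr X1) (gr X2)) \<le> Kc * Q * real n ^ 2 * real l * Mxf n k l D' LZ * psq n k l (psub X1 X2)"
      unfolding gr_def Q_def LZ_def
      by (rule lip_main[OF n1 k1 l1 that(1) sb ds ds1 s1b s2b dm1 m1b m2b that(2,3)])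
    then have "sqrt (psq n k l (psub (gr X1) (gr X2))) \<le> sqrt (Kc * Q * real n ^ 2 * real l * Mxf n k l D' LZ * psq n k l (psub X1 X2))"
      by (rule real_sqrt_le_mono)
    moreover note P0[of D']
    ultimately show ?thesis by (simp add: pnorm_psq Lf_def real_sqrt_mult)
  qed
  have deriv: "((\<lambda>\<tau>. f (padd X (pscale \<tau> Y))) has_real_derivative pinner n k l (gr (padd X (pscale \<tau> Y))) Y) (at \<tau>)"
    for X Y \<tau>
    unfolding f_def gr_def deriv_alg[symmetric]
    by (rule deriv_phi_raw[OF ds' dm0])
  have ex: "has_pgrad n k l f X (gr X)" for X
    by (rule has_pgrad_from_lip[where R="pnorm n k l X + 1" and Lr="Lf (pnorm n k l X + 1)"])
       (use deriv lip pnorm_nonneg[of n k l X] Lf0 in \<open>auto simp: add_pos_nonneg\<close>)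
  show "let f = phi_tilde \<sigma> (\<mu>d 0) n k l S;
          Cphi = poly3 (\<lambda>i j m. Kc * ecoef i * ecoef j * ecoef m) 6 s1 s2 m2;
          LZ = sqrt (1 + (norm_S n S)\<^sup>2);
          L = sqrt (Cphi * real n ^ 2 * real l *
                max (D ^ 4 * LZ ^ 4) (max (real l * D ^ 8 * LZ ^ 4) (max (real l ^ 2 * D ^ 6 * LZ ^ 2)
                  (max (real n * D ^ 2 * LZ ^ 2) (max (real n * real k * real l) (real l ^ 3 * D ^ 4))))))
      in 0 \<le> Cphi
         \<and> (\<forall>\<Theta>. pnorm n k l \<Theta> \<le> D \<longrightarrow> (\<exists>G. has_pgrad n k l f \<Theta> G))
         \<and> (\<forall>\<Theta> \<Theta>' G G'. pnorm n k l \<Theta> \<le> D \<longrightarrow> pnorm n k l \<Theta>' \<le> D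
              \<longrightarrow> has_pgrad n k l f \<Theta> G \<longrightarrow> has_pgrad n k l f \<Theta>' G'
              \<longrightarrow> pnorm n k l (psub G G') \<le> L * pnorm n k l (psub \<Theta> \<Theta>'))"
    unfolding Let_def poly3_eq Mxf_def[symmetric] LZ_def[symmetric] f_def[symmetric]
  proof (intro conjI allI impI)
    show "0 \<le> Kc * ((1 + s1\<^sup>2) ^ 3 * (1 + s2\<^sup>2) ^ 3 * (1 + m2\<^sup>2) ^ 3)" using K0 by simp
  next
    fix \<Theta> assume "pnorm n k l \<Theta> \<le> D"
    show "\<exists>G. has_pgrad n k l f \<Theta> G" using ex by blast
  next
    fix \<Theta> \<Theta>' G G'
    assume a: "pnorm n k l \<Theta> \<le> D" "pnorm n k l \<Theta>' \<le> D" "has_pgrad n k l f \<Theta> G" "has_pgrad n k l f \<Theta>' G'"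
    have z1: "pnorm n k l (psub G (gr \<Theta>)) = 0" by (rule pgrad_unique[OF a(3) ex])
    have z2: "pnorm n k l (psub (gr \<Theta>') G') = 0"
      using pgrad_unique[OF a(4) ex] pnorm_psub_comm by metis
    have "pnorm n k l (psub G G') \<le> pnorm n k l (psub (gr \<Theta>) (gr \<Theta>'))"
      using pnorm_cong3[of n k l G G' "gr \<Theta>" "gr \<Theta>'"] z1 z2 by linarith
    also have "\<dots> \<le> Lf D * pnorm n k l (psub \<Theta> \<Theta>')" by (rule lip[OF D0 a(1,2)])
    finally show "pnorm n k l (psub G G') \<le> sqrt (Kc * ((1 + s1\<^sup>2) ^ 3 * (1 + s2\<^sup>2) ^ 3 * (1 + m2\<^sup>2) ^ 3) * real n ^ 2 * real l * Mxf n k l D LZ) * pnorm n k l (psub \<Theta> \<Theta>')"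
      by (simp add: Lf_def Q_def mult.assoc)
  qed
qed

end
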